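(* Let $X\sim\mathrm{Binom}(n,\tfrac12)$. Then, as $n\to\infty$, with logarithms natural (units: nats), $$H(X)=\frac12\ln\frac{\pi e n}{2}-\frac1{12n^2}+O(n^{-3}),$$ $$V(X)=\frac12-\frac1{2n}-\frac1{2n^2}+O(n^{-3}),$$ where $H(X)=\mathbb E[\ln\frac1{P_X(X)}]$ is the entropy and $V(X)=\mathrm{Var}[\ln\frac1{P_X(X)}]$ is the varentropy. *)

theory Defs
  imports "HOL-Probability.Probability" "HOL-Library.Landau_Symbols"
begin

definition binom_info :: "nat \<Rightarrow> nat \<Rightarrow> real" where
  "binom_info n k = ln (1 / pmf (binomial_pmf n (1/2)) k)"

definition binom_entropy :: "nat \<Rightarrow> real" where
  "binom_entropy n = measure_pmf.expectation (binomial_pmf n (1/2)) (binom_info n)"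

definition binom_varentropy :: "nat \<Rightarrow> real" where
  "binom_varentropy n = measure_pmf.variance (binomial_pmf n (1/2)) (binom_info n)"

end

theory Submission
  imports Defs
begin

definition EE :: "nat \<Rightarrow> (nat \<Rightarrow> real) \<Rightarrow> real" where
  "EE n f = (\<Sum>k\<le>n. real (n choose k) * f k) / 2^n"

lemma EE_expect: "measure_pmf.expectation (binomial_pmf n (1/2)) f = EE n f"
proof -
  have "measure_pmf.expectation (binomial_pmf n (1/2)) f =
     (\<Sum>k\<le>n. (real (n choose k) * (1/2) ^ k * (1 - 1/2) ^ (n - k)) *\<^sub>R f k)"
    by (rule expectation_binomial_pmf') auto
  also have "\<dots> = (\<Sum>k\<le>n. real (n choose k) * f k / 2^n)"
  proof (rule sum.cong)
    fix k assume "k \<in> {..n}"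
    hence "(1/2::real) ^ k * (1/2) ^ (n - k) = (1/2)^n"
      by (simp add: power_add[symmetric])
    thus "(real (n choose k) * (1/2) ^ k * (1 - 1/2) ^ (n - k)) *\<^sub>R f k = real (n choose k) * f k / 2^n"
      by (simp add: power_divide)
  qed simp
  finally show ?thesis unfolding EE_def by (simp add: sum_divide_distrib)
qed

lemma EE_cong: "(\<And>k. k \<le> n \<Longrightarrow> f k = g k) \<Longrightarrow> EE n f = EE n g"
  unfolding EE_def by (auto intro!: sum.cong arg_cong[where f="\<lambda>x. x / 2^n"])

lemma EE_add: "EE n (\<lambda>k. f k + g k) = EE n f + EE n g"
  unfolding EE_def by (simp add: distrib_left sum.distrib add_divide_distrib)

lemma EE_diff: "EE n (\<lambda>k. f k - g k) = EE n f - EE n g"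
  unfolding EE_def by (simp add: right_diff_distrib sum_subtractf diff_divide_distrib)

lemma EE_cmult: "EE n (\<lambda>k. c * f k) = c * EE n f"
  unfolding EE_def by (simp add: sum_distrib_left mult_ac)

lemma EE_multc: "EE n (\<lambda>k. f k * c) = EE n f * c"
  using EE_cmult[of n c f] by (simp add: mult_ac)

lemma EE_const: "EE n (\<lambda>k. c) = c"
proof -
  have "(\<Sum>k\<le>n. real (n choose k)) = 2^n"
    using choose_row_sum[of n] by (metis of_nat_numeral of_nat_power of_nat_sum)
  thus ?thesis unfolding EE_def by (simp add: sum_distrib_right[symmetric])
qed

lemma EE_mono: "(\<And>k. k \<le> n \<Longrightarrow> f k \<le> g k) \<Longrightarrow> EE n f \<le> EE n g"
  unfolding EE_def by (auto intro!: divide_right_mono sum_mono mult_left_mono)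

lemma EE_abs: "\<bar>EE n f\<bar> \<le> EE n (\<lambda>k. \<bar>f k\<bar>)"
proof -
  have "\<bar>\<Sum>k\<le>n. real (n choose k) * f k\<bar> \<le> (\<Sum>k\<le>n. \<bar>real (n choose k) * f k\<bar>)"
    by (rule sum_abs)
  hence "\<bar>\<Sum>k\<le>n. real (n choose k) * f k\<bar> / 2^n \<le> (\<Sum>k\<le>n. \<bar>real (n choose k) * f k\<bar>) / 2^n"
    by (rule divide_right_mono) simp
  thus ?thesis unfolding EE_def by (simp add: abs_mult)
qed

lemma EE_Suc: "EE (Suc n) f = (EE n f + EE n (\<lambda>k. f (Suc k))) / 2"
proof -
  have A: "(\<Sum>k\<le>Suc n. real (Suc n choose k) * f k) =
      f 0 + (\<Sum>k\<le>n. real (n choose k) * f (Suc k)) + (\<Sum>k\<le>n. real (n choose Suc k) * f (Suc k))"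
    by (simp add: sum.atMost_Suc_shift[of _ n] binomial_Suc_Suc distrib_right sum.distrib del: sum.atMost_Suc)
  have "(\<Sum>k\<le>Suc n. real (n choose k) * f k) = (\<Sum>k\<le>n. real (n choose k) * f k)"
    by simp
  hence B: "(\<Sum>k\<le>n. real (n choose k) * f k) = f 0 + (\<Sum>k\<le>n. real (n choose Suc k) * f (Suc k))"
    by (simp add: sum.atMost_Suc_shift[of _ n] del: sum.atMost_Suc)
  show ?thesis unfolding EE_def using A B by (simp add: field_simps)
qed

definition DD :: "nat \<Rightarrow> nat \<Rightarrow> real" where "DD n k = real k - real n / 2"

lemma DD_Suc: "DD (Suc n) k = DD n k - 1/2" "DD (Suc n) (Suc k) = DD n k + 1/2"
  unfolding DD_def by (simp_all add: field_simps)

lemma EE_Suc_DD: "EE (Suc n) (\<lambda>k. f (DD (Suc n) k)) = (EE n (\<lambda>k. f (DD n k - 1/2)) + EE n (\<lambda>k. f (DD n k + 1/2))) / 2"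
  unfolding EE_Suc DD_Suc(2) unfolding DD_Suc(1) ..

lemma moments:
  "EE n (\<lambda>k. DD n k ^ 2) = real n / 4 \<and>
   EE n (\<lambda>k. DD n k ^ 4) = (3 * real n ^ 2 - 2 * real n) / 16 \<and>
   EE n (\<lambda>k. DD n k ^ 6) = (15 * real n ^ 3 - 30 * real n ^ 2 + 16 * real n) / 64 \<and>
   EE n (\<lambda>k. DD n k ^ 8) = (105 * real n ^ 4 - 420 * real n ^ 3 + 588 * real n ^ 2 - 272 * real n) / 256"
proof (induction n)
  case 0
  show ?case by (simp add: EE_def DD_def)
next
  case (Suc n)
  have e2: "\<And>d::real. (d - 1/2)^2 + (d+1/2)^2 = 2 * d^2 + 1/2" by algebra
  have e4: "\<And>d::real. (d - 1/2)^4 + (d+1/2)^4 = 2 * d^4 + 3 * d^2 + 1/8" by algebra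
  have e6: "\<And>d::real. (d - 1/2)^6 + (d+1/2)^6 = 2 * d^6 + 15/2 * d^4 + 15/8 * d^2 + 1/32" by algebra
  have e8: "\<And>d::real. (d - 1/2)^8 + (d+1/2)^8 = 2 * d^8 + 14 * d^6 + 35/4 * d^4 + 7/8 * d^2 + 1/128" by algebra
  have g: "\<And>j p. (\<And>d::real. (d - 1/2)^j + (d+1/2)^j = p d) \<Longrightarrow>
     EE (Suc n) (\<lambda>k. DD (Suc n) k ^ j) = EE n (\<lambda>k. p (DD n k)) / 2"
  proof -
    fix j p assume h: "\<And>d::real. (d - 1/2)^j + (d+1/2)^j = p d"
    have "EE (Suc n) (\<lambda>k. DD (Suc n) k ^ j) = (EE n (\<lambda>k. (DD n k - 1/2)^j) + EE n (\<lambda>k. (DD n k + 1/2)^j)) / 2"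
      by (rule EE_Suc_DD)
    also have "\<dots> = EE n (\<lambda>k. p (DD n k)) / 2" by (simp add: EE_add[symmetric] h)
    finally show "EE (Suc n) (\<lambda>k. DD (Suc n) k ^ j) = EE n (\<lambda>k. p (DD n k)) / 2" .
  qed
  note G2 = g[OF e2] and G4 = g[OF e4] and G6 = g[OF e6] and G8 = g[OF e8]
  show ?case
    unfolding G2 G4 G6 G8 unfolding EE_add EE_cmult EE_const using Suc.IH
    by (simp add: field_simps) (simp add: algebra_simps power2_eq_square power3_eq_cube power4_eq_xxxx)
qed

lemma mgf: "EE n (\<lambda>k. exp (l * DD n k)) = ((exp (l/2) + exp (-l/2))/2)^n"
proof (induction n)
  case 0 show ?case by (simp add: EE_def DD_def)
next
  case (Suc n)
  have "EE (Suc n) (\<lambda>k. exp (l * DD (Suc n) k)) =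
     (EE n (\<lambda>k. exp (l * (DD n k - 1/2))) + EE n (\<lambda>k. exp (l * (DD n k + 1/2)))) / 2"
    by (rule EE_Suc_DD)
  also have "(\<lambda>k. exp (l * (DD n k - 1/2))) = (\<lambda>k. exp (l * DD n k) * exp (-l/2))"
    by (simp add: exp_add[symmetric] algebra_simps)
  also have "(\<lambda>k. exp (l * (DD n k + 1/2))) = (\<lambda>k. exp (l * DD n k) * exp (l/2))"
    by (simp add: exp_add[symmetric] algebra_simps)
  finally show ?case unfolding EE_multc Suc.IH by (simp add: field_simps)
qed

lemma cosh_bound: fixes l :: real assumes "l \<ge> 0" shows "(exp (l/2) + exp (-l/2))/2 \<le> exp (l^2/8)"
proof -
  have h: "-l * (1/2) + ln (1 + (1/2) * (exp l - 1)) \<le> l^2/8"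
    using Hoeffdings_lemma_aux[of l "1/2"] assms by simp
  have pos: "1 + (1/2) * (exp l - 1) > 0"
  proof - have "0 < 1 + exp l" by (rule add_pos_pos) simp_all then show ?thesis by (simp add: field_simps) qed
  have "1 + (1/2) * (exp l - 1) = exp (ln (1 + (1/2) * (exp l - 1)))" using pos by simp
  also have "\<dots> \<le> exp (l^2/8 + l/2)" using h by simp
  also have "exp (l^2/8 + l/2) = exp (l^2/8) * exp (l/2)" by (rule exp_add)
  finally have A: "(1 + exp l)/2 \<le> exp (l^2/8) * exp (l/2)" by (simp add: field_simps)
  have "(exp (l/2) + exp (-l/2))/2 = (1 + exp l)/2 * exp (-l/2)"
    by (simp add: field_simps exp_add[symmetric] exp_minus)
  also have "\<dots> \<le> exp (l^2/8) * exp (l/2) * exp (-l/2)"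
    using A by (intro mult_right_mono) auto
  also have "\<dots> = exp (l^2/8)" by (simp add: exp_add[symmetric])
  finally show ?thesis .
qed

lemma pow_le_exp: assumes "0 \<le> (x::real)" shows "x^j / fact j \<le> exp x"
proof -
  have s: "(\<lambda>n. x^n /\<^sub>R fact n) sums exp x" by (rule exp_converges)
  have "sum (\<lambda>n. x^n /\<^sub>R fact n) {j} \<le> suminf (\<lambda>n. x^n /\<^sub>R fact n)"
    by (rule sum_le_suminf) (use s assms in \<open>auto simp: sums_iff\<close>)
  thus ?thesis using s by (simp add: sums_iff divide_inverse mult.commute)
qed

lemma even_pow_le: "(z::real)^(2*m) \<le> fact (2*m) * (exp z + exp (-z))"
proof (cases "z \<ge> 0")
  case True
  have "z^(2*m) / fact (2*m) \<le> exp z" by (rule pow_le_exp[OF True])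
  hence "z^(2*m) \<le> fact (2*m) * exp z" by (simp add: field_simps)
  also have "\<dots> \<le> fact (2*m) * (exp z + exp (-z))" by (intro mult_left_mono) auto
  finally show ?thesis .
next
  case False
  have "(-z)^(2*m) / fact (2*m) \<le> exp (-z)" by (rule pow_le_exp) (use False in auto)
  moreover have "(-z)^(2*m) = z^(2*m)" by (simp add: power_mult)
  ultimately have "z^(2*m) \<le> fact (2*m) * exp (-z)" by (simp add: field_simps)
  also have "\<dots> \<le> fact (2*m) * (exp z + exp (-z))" by (intro mult_left_mono) auto
  finally show ?thesis .
qed

definition YY :: "nat \<Rightarrow> nat \<Rightarrow> real" where "YY n k = 4 * DD n k ^ 2 / real n"

lemma YY_nonneg: "YY n k \<ge> 0" unfolding YY_def by simp

lemma moment_bound: assumes "n \<ge> 1" shows "EE n (\<lambda>k. YY n k ^ m) \<le> 6 * 4^m * fact (2*m)"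
proof -
  define l where "l = 1 / sqrt (real n)"
  have l0: "l > 0" using assms by (simp add: l_def)
  have l2: "l^2 = 1 / real n" using assms by (simp add: l_def power_divide)
  have pt: "YY n k ^ m \<le> 4^m * fact (2*m) * (exp (l * DD n k) + exp (- (l * DD n k)))" for k
  proof -
    have "YY n k ^ m = 4^m * (l * DD n k)^(2*m)"
      unfolding YY_def power_mult power_mult_distrib l2 by (simp add: power_mult_distrib field_simps)
    also have "\<dots> \<le> 4^m * (fact (2*m) * (exp (l * DD n k) + exp (- (l * DD n k))))"
      by (intro mult_left_mono even_pow_le) auto
    finally show ?thesis by simp
  qed
  have "EE n (\<lambda>k. YY n k ^ m) \<le> EE n (\<lambda>k. 4^m * fact (2*m) * (exp (l * DD n k) + exp (- (l * DD n k))))"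
    by (rule EE_mono) (rule pt)
  also have "\<dots> = 4^m * fact (2*m) * (EE n (\<lambda>k. exp (l * DD n k)) + EE n (\<lambda>k. exp ((-l) * DD n k)))"
    by (simp add: EE_cmult EE_add)
  also have "EE n (\<lambda>k. exp (l * DD n k)) \<le> exp (1/8)"
  proof -
    have "EE n (\<lambda>k. exp (l * DD n k)) = ((exp (l/2) + exp (-l/2))/2)^n" by (rule mgf)
    also have "\<dots> \<le> exp (l^2/8) ^ n"
      by (intro power_mono cosh_bound) (use l0 in \<open>auto intro: add_nonneg_nonneg\<close>)
    also have "\<dots> = exp (real n * (l^2/8))" by (rule exp_of_nat_mult[symmetric])
    also have "\<dots> = exp (1/8)" using assms l2 by simp
    finally show ?thesis .
  qed
  also have "EE n (\<lambda>k. exp ((-l) * DD n k)) \<le> exp (1/8)"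
  proof -
    have "EE n (\<lambda>k. exp ((-l) * DD n k)) = ((exp (-l/2) + exp (-(-l)/2))/2)^n" by (rule mgf)
    also have "\<dots> = ((exp (l/2) + exp (-l/2))/2)^n" by (simp add: add.commute)
    also have "\<dots> \<le> exp (l^2/8) ^ n"
      by (intro power_mono cosh_bound) (use l0 in \<open>auto intro: add_nonneg_nonneg\<close>)
    also have "\<dots> = exp (real n * (l^2/8))" by (rule exp_of_nat_mult[symmetric])
    also have "\<dots> = exp (1/8)" using assms l2 by simp
    finally show ?thesis .
  qed
  also have "exp (1/8::real) \<le> 3"
    using exp_le exp_le_cancel_iff[of "1/8" 1] by linarith
  finally show ?thesis by (simp add: mult_ac)
qed

lemma taylor_bound:
  fixes f f' :: "real \<Rightarrow> real"
  assumes f0: "f 0 = 0"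
    and d: "\<And>t. 0 \<le> t \<Longrightarrow> t \<le> a \<Longrightarrow> (f has_real_derivative f' t) (at t)"
    and b: "\<And>t. 0 \<le> t \<Longrightarrow> t \<le> a \<Longrightarrow> \<bar>f' t\<bar> \<le> M * t^j"
    and x: "0 \<le> x" "x \<le> a"
  shows "\<bar>f x\<bar> \<le> M * x^(Suc j) / real (Suc j)"
proof -
  have dp: "((\<lambda>t. M * t^(Suc j) / real (Suc j)) has_real_derivative M * t^j) (at t)" for t
  proof -
    have "((\<lambda>t. t^(Suc j)) has_real_derivative real (Suc j) * t^j) (at t)"
      using DERIV_pow[of "Suc j" t] by simp
    from DERIV_cdivide[OF DERIV_cmult[OF this, of M], of "real (Suc j)"]
    show ?thesis by (simp add: field_simps del: of_nat_Suc)
  qed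
  have "(\<lambda>t. M * t^(Suc j) / real (Suc j) - f t) 0 \<le> (\<lambda>t. M * t^(Suc j) / real (Suc j) - f t) x"
  proof (rule DERIV_nonneg_imp_nondecreasing[OF x(1)])
    fix t assume "0 \<le> t" "t \<le> x"
    with x have t: "0 \<le> t" "t \<le> a" by auto
    show "\<exists>y. ((\<lambda>t. M * t^(Suc j) / real (Suc j) - f t) has_real_derivative y) (at t) \<and> 0 \<le> y"
      using DERIV_diff[OF dp d[OF t]] b[OF t] by (intro exI[of _ "M * t^j - f' t"]) auto
  qed
  moreover have "(\<lambda>t. M * t^(Suc j) / real (Suc j) + f t) 0 \<le> (\<lambda>t. M * t^(Suc j) / real (Suc j) + f t) x"
  proof (rule DERIV_nonneg_imp_nondecreasing[OF x(1)])
    fix t assume "0 \<le> t" "t \<le> x"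
    with x have t: "0 \<le> t" "t \<le> a" by auto
    show "\<exists>y. ((\<lambda>t. M * t^(Suc j) / real (Suc j) + f t) has_real_derivative y) (at t) \<and> 0 \<le> y"
      using DERIV_add[OF dp d[OF t]] b[OF t] by (intro exI[of _ "M * t^j + f' t"]) auto
  qed
  ultimately show ?thesis using f0 by auto
qed

definition bfun :: "real \<Rightarrow> real" where
  "bfun t = (ln (1 + t) - ln (1 - t)) / 2 - t - t^3 / (3 * (1 - t^2))"

lemma bfun_bound: assumes "0 \<le> t" "t \<le> 1/3" shows "\<bar>bfun t\<bar> \<le> t^5 / 5"
proof -
  have "\<bar>bfun t\<bar> \<le> 1 * t^(Suc 4) / real (Suc 4)"
  proof (rule taylor_bound[where f' = "\<lambda>t. - 2 * t^4 / (3 * (1 - t^2)^2)" and a = "1/3"])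
    show "bfun 0 = 0" by (simp add: bfun_def)
    fix s :: real assume s: "0 \<le> s" "s \<le> 1/3"
    have sq: "s^2 \<le> (1/3)^2" using s by (intro power_mono) auto
    hence s1: "1 - s^2 > 0" "1 - s > 0" "1 + s > 0" using s by (auto simp: power2_eq_square)
    show "(bfun has_real_derivative - 2 * s^4 / (3 * (1 - s^2)^2)) (at s)"
      unfolding bfun_def[abs_def]
      apply (rule derivative_eq_intros refl | use s1 in force)+
      using s1 apply simp
      apply (subgoal_tac "3 - 3 * s^2 \<noteq> 0" "1 - s^2 \<noteq> 0" "1 - s \<noteq> 0" "1 + s \<noteq> 0")
      apply (simp add: divide_simps)
      apply algebra
      by auto
    have "(1 - s^2)^2 \<ge> (8/9)^2" using sq by (intro power_mono) (auto simp: power2_eq_square)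
    hence "2 * s^4 / (3 * (1 - s^2)^2) \<le> 2 * s^4 / (3 * (8/9)^2)"
      by (intro divide_left_mono mult_pos_pos) auto
    also have "\<dots> \<le> s^4" using s by (simp add: field_simps)
    finally show "\<bar>- 2 * s^4 / (3 * (1 - s^2)^2)\<bar> \<le> 1 * s^4" by simp
  qed (use assms in auto)
  thus ?thesis by simp
qed

definition h1fun :: "real \<Rightarrow> real" where
  "h1fun x = ln (1 + x) - ln (1 - x) - 2*x - 2*x^3/3 - 2*x^5/5"

definition hfun :: "real \<Rightarrow> real" where
  "hfun x = (1 + x) * ln (1 + x) + (1 - x) * ln (1 - x) - x^2 - x^4/6 - x^6/15"

definition lfun :: "real \<Rightarrow> real" where
  "lfun x = ln (1 - x^2) + x^2 + x^4/2"

lemma half_facts: fixes s :: real assumes "0 \<le> s" "s \<le> 1/2"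
  shows "1 - s^2 > 0" "1 - s > 0" "1 + s > 0" "1 / (1 - s^2) \<le> 4/3"
proof -
  have sq: "s^2 \<le> (1/2)^2" using assms by (intro power_mono) auto
  thus "1 - s^2 > 0" "1 - s > 0" "1 + s > 0" using assms by (auto simp: power2_eq_square)
  show "1 / (1 - s^2) \<le> 4/3" using sq by (simp add: field_simps power2_eq_square)
qed

lemma h1fun_bound: assumes "0 \<le> x" "x \<le> 1/2" shows "\<bar>h1fun x\<bar> \<le> 3 * x^7 / 7"
proof -
  have "\<bar>h1fun x\<bar> \<le> 3 * x^(Suc 6) / real (Suc 6)"
  proof (rule taylor_bound[where f' = "\<lambda>t. 2 * t^6 / (1 - t^2)" and a = "1/2"])
    show "h1fun 0 = 0" by (simp add: h1fun_def)
    fix s :: real assume s: "0 \<le> s" "s \<le> 1/2"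
    note s1 = half_facts[OF s]
    show "(h1fun has_real_derivative 2 * s^6 / (1 - s^2)) (at s)"
      unfolding h1fun_def[abs_def]
      apply (rule derivative_eq_intros refl | use s1 in force)+
      using s1 apply simp
      apply (subgoal_tac "1 - s^2 \<noteq> 0" "1 - s \<noteq> 0" "1 + s \<noteq> 0")
      apply (simp add: divide_simps)
      apply algebra
      by auto
    have "2 * s^6 / (1 - s^2) = 2 * s^6 * (1 / (1 - s^2))" by simp
    also have "\<dots> \<le> 2 * s^6 * (4/3)" using s1 by (intro mult_left_mono) auto
    also have "\<dots> \<le> 3 * s^6" using s by simp
    finally show "\<bar>2 * s^6 / (1 - s^2)\<bar> \<le> 3 * s^6" using s1 by simp
  qed (use assms in auto)
  thus ?thesis by simp
qed

lemma hfun_bound0: assumes "0 \<le> x" "x \<le> 1/2" shows "\<bar>hfun x\<bar> \<le> 3 * x^8 / 56"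
proof -
  have "\<bar>hfun x\<bar> \<le> (3/7) * x^(Suc 7) / real (Suc 7)"
  proof (rule taylor_bound[where f' = "h1fun" and a = "1/2"])
    show "hfun 0 = 0" by (simp add: hfun_def)
    fix s :: real assume s: "0 \<le> s" "s \<le> 1/2"
    note s1 = half_facts[OF s]
    show "(hfun has_real_derivative h1fun s) (at s)"
      unfolding hfun_def[abs_def]
      apply (rule derivative_eq_intros refl | use s1 in force)+
      using s1 by (simp add: h1fun_def divide_simps)
    show "\<bar>h1fun s\<bar> \<le> 3/7 * s^7" using h1fun_bound[OF s] by simp
  qed (use assms in auto)
  thus ?thesis by simp
qed

lemma lfun_bound0: assumes "0 \<le> x" "x \<le> 1/2" shows "\<bar>lfun x\<bar> \<le> x^6 / 2"
proof -
  have "\<bar>lfun x\<bar> \<le> 3 * x^(Suc 5) / real (Suc 5)"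
  proof (rule taylor_bound[where f' = "\<lambda>t. - 2 * t^5 / (1 - t^2)" and a = "1/2"])
    show "lfun 0 = 0" by (simp add: lfun_def)
    fix s :: real assume s: "0 \<le> s" "s \<le> 1/2"
    note s1 = half_facts[OF s]
    show "(lfun has_real_derivative - 2 * s^5 / (1 - s^2)) (at s)"
      unfolding lfun_def[abs_def]
      apply (rule derivative_eq_intros refl | use s1 in force)+
      using s1 apply simp
      apply (subgoal_tac "1 - s^2 \<noteq> 0")
      apply (simp add: divide_simps)
      apply algebra
      by auto
    have "2 * s^5 / (1 - s^2) = 2 * s^5 * (1 / (1 - s^2))" by simp
    also have "\<dots> \<le> 2 * s^5 * (4/3)" using s1 s by (intro mult_left_mono) auto
    also have "\<dots> \<le> 3 * s^5" using s by simp
    finally show "\<bar>- 2 * s^5 / (1 - s^2)\<bar> \<le> 3 * s^5" using s1 s by simp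
  qed (use assms in auto)
  thus ?thesis by simp
qed

lemma hfun_bound: assumes "\<bar>x\<bar> \<le> 1/2" shows "\<bar>hfun x\<bar> \<le> 3 * x^8 / 56"
proof (cases "x \<ge> 0")
  case True thus ?thesis using hfun_bound0 assms by auto
next
  case False
  have "hfun x = hfun (-x)" unfolding hfun_def by simp
  thus ?thesis using hfun_bound0[of "-x"] assms False by simp
qed

lemma lfun_bound: assumes "\<bar>x\<bar> \<le> 1/2" shows "\<bar>lfun x\<bar> \<le> x^6 / 2"
proof (cases "x \<ge> 0")
  case True thus ?thesis using lfun_bound0 assms by auto
next
  case False
  have "lfun x = lfun (-x)" unfolding lfun_def by simp
  thus ?thesis using lfun_bound0[of "-x"] assms False by simp
qed

definition sr :: "nat \<Rightarrow> real" where
  "sr m = ln (fact m) - ((real m + 1/2) * ln (real m) - real m + 1 / (12 * real m))"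

lemma sr_step: assumes "m \<ge> 1"
  shows "sr m - sr (Suc m) = bfun (1 / (2 * real m + 1)) * (2 * real m + 1)"
proof -
  define t where "t = 1 / (2 * real m + 1)"
  define A where "A = ln (real m)"
  define B where "B = ln (real m + 1)"
  define F where "F = ln (fact m :: real)"
  define c0 where "c0 = 1 / (12 * real m)"
  define c1 where "c1 = 1 / (12 * (real m + 1))"
  have m0: "real m > 0" using assms by simp
  have lf: "ln (fact (Suc m) :: real) = B + F"
    unfolding B_def F_def by (simp add: ln_mult add.commute)
  have srm: "sr m = F - ((real m + 1/2) * A - real m + c0)" unfolding sr_def F_def A_def c0_def ..
  have srs: "sr (Suc m) = B + F - ((real m + 1 + 1/2) * B - (real m + 1) + c1)"
  proof -
    have rs: "real (Suc m) = real m + 1" by simp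
    show ?thesis by (simp only: sr_def lf rs B_def c1_def)
  qed
  have c01: "c0 - c1 = 1 / (12 * real m * (real m + 1))"
    unfolding c0_def c1_def using m0 by (simp add: field_simps)
  have e1: "1 + t = 2 * (real m + 1) / (2 * real m + 1)" unfolding t_def using m0 by (simp add: field_simps)
  have e2: "1 - t = 2 * real m / (2 * real m + 1)" unfolding t_def using m0 by (simp add: field_simps)
  have l1: "ln (1 + t) = ln 2 + B - ln (2 * real m + 1)"
  proof -
    have "ln (1 + t) = ln (2 * (real m + 1)) - ln (2 * real m + 1)" unfolding e1 using m0 by (subst ln_div) auto
    also have "ln (2 * (real m + 1)) = ln 2 + ln (real m + 1)" using m0 by (subst ln_mult) auto
    finally show ?thesis unfolding B_def .
  qed
  have l2: "ln (1 - t) = ln 2 + A - ln (2 * real m + 1)"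
  proof -
    have "ln (1 - t) = ln (2 * real m) - ln (2 * real m + 1)" unfolding e2 using m0 by (subst ln_div) auto
    also have "ln (2 * real m) = ln 2 + ln (real m)" using m0 by (subst ln_mult) auto
    finally show ?thesis unfolding A_def .
  qed
  have tq: "t * (2 * real m + 1) = 1" unfolding t_def using m0 by simp
  have h: "t^2 * (2 * real m + 1)^2 = 1" using tq by (metis power_mult_distrib power_one)
  have omt: "1 - t^2 = 4 * real m * (real m + 1) * t^2"
  proof -
    have "4 * real m * (real m + 1) * t^2 + t^2 = t^2 * (2 * real m + 1)^2"
      by (simp add: algebra_simps power2_eq_square)
    thus ?thesis using h by linarith
  qed
  have c3: "t^3 / (3 * (1 - t^2)) * (2 * real m + 1) = 1 / (12 * real m * (real m + 1))"
  proof -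
    have tpos: "t > 0" unfolding t_def using m0 by simp
    have "t^3 / (3 * (1 - t^2)) * (2 * real m + 1) = t^2 * (t * (2 * real m + 1)) / (3 * (4 * real m * (real m + 1) * t^2))"
      unfolding omt by (simp add: power3_eq_cube power2_eq_square mult_ac)
    also have "\<dots> = (t^2 * 1) / (t^2 * (12 * real m * (real m + 1)))" unfolding tq by (simp add: ac_simps)
    also have "\<dots> = 1 / (12 * real m * (real m + 1))" using tpos by (subst mult_divide_mult_cancel_left) auto
    finally show ?thesis .
  qed
  have "bfun t * (2 * real m + 1) = (ln (1 + t) - ln (1 - t)) / 2 * (2 * real m + 1) - t * (2 * real m + 1)
      - t^3 / (3 * (1 - t^2)) * (2 * real m + 1)"
    unfolding bfun_def by (simp add: algebra_simps)
  also have "\<dots> = (B - A) / 2 * (2 * real m + 1) - 1 - (c0 - c1)"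
    unfolding tq c3 l1 l2 c01 by simp
  also have "\<dots> = sr m - sr (Suc m)" unfolding srm srs by (simp add: field_simps)
  finally show ?thesis unfolding t_def by simp
qed

definition TT :: "nat \<Rightarrow> real" where "TT m = 1 / (real m * (real m + 1) * (real m + 2))"

lemma sr_step_bound: assumes "m \<ge> 1" shows "\<bar>sr m - sr (Suc m)\<bar> \<le> (TT m - TT (Suc m)) / 10"
proof -
  define t where "t = 1 / (2 * real m + 1)"
  have m0: "real m \<ge> 1" using assms by simp
  have t: "0 \<le> t" "t \<le> 1/3" unfolding t_def using m0 by (auto simp: field_simps)
  have "\<bar>sr m - sr (Suc m)\<bar> = \<bar>bfun t\<bar> * (2 * real m + 1)"
    unfolding sr_step[OF assms] t_def abs_mult by simp
  also have "\<dots> \<le> t^5 / 5 * (2 * real m + 1)"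
    by (intro mult_right_mono bfun_bound t) (use m0 in simp)
  also have "\<dots> = t^4 / 5 * (t * (2 * real m + 1))" by (simp add: eval_nat_numeral mult_ac)
  also have "t * (2 * real m + 1) = 1" unfolding t_def using m0 by simp
  also have "t^4 = 1 / (2 * real m + 1)^4" unfolding t_def by (simp add: power_divide)
  also have "1 / (2 * real m + 1)^4 / 5 * 1 = 1 / (5 * (2 * real m + 1)^4)" by simp
  also have "\<dots> \<le> (TT m - TT (Suc m)) / 10"
  proof -
    have ts: "TT (Suc m) = 1 / ((real m + 1) * (real m + 2) * (real m + 3))" unfolding TT_def
      by (simp add: algebra_simps)
    have nz: "real m * (real m + 1) * (real m + 2) \<noteq> 0" "(real m + 1) * (real m + 2) * (real m + 3) \<noteq> 0"
       "real m * (real m + 1) * (real m + 2) * (real m + 3) \<noteq> 0" using m0 by auto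
    have d: "TT m - TT (Suc m) = 3 / (real m * (real m + 1) * (real m + 2) * (real m + 3))"
      unfolding ts unfolding TT_def using nz by (simp add: divide_simps)
    have p: "2 * (real m * (real m + 1) * (real m + 2) * (real m + 3)) \<le> 3 * (2 * real m + 1)^4"
    proof -
      have "3 * (2 * real m + 1)^4 - 2 * (real m * (real m + 1) * (real m + 2) * (real m + 3))
          = 46 * real m^4 + 84 * real m^3 + 50 * real m^2 + 12 * real m + 3"
        by (simp add: algebra_simps power2_eq_square power3_eq_cube power4_eq_xxxx)
      moreover have "46 * real m^4 + 84 * real m^3 + 50 * real m^2 + 12 * real m + 3 \<ge> 0" by simp
      ultimately show ?thesis by linarith
    qed
    define P where "P = real m * (real m + 1) * (real m + 2) * (real m + 3)"
    have Pp: "P > 0" unfolding P_def using m0 by simp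
    have "1 / (5 * (2 * real m + 1)^4) = 3 / (15 * (2 * real m + 1)^4)" by simp
    also have "\<dots> \<le> 3 / (10 * P)" 
      by (rule frac_le) (use Pp p in \<open>auto simp: P_def\<close>)
    also have "\<dots> = 3 / P / 10" by simp
    finally show ?thesis unfolding d P_def .
  qed
  finally show ?thesis .
qed

lemma TT_pos: "m \<ge> 1 \<Longrightarrow> TT m > 0" unfolding TT_def by simp

lemma TT_le: assumes "m \<ge> 1" shows "TT m \<le> 1 / real m ^ 3"
proof -
  have "real m ^ 3 \<le> real m * (real m + 1) * (real m + 2)"
    by (simp add: power3_eq_cube mult_mono)
  thus ?thesis unfolding TT_def using assms by (intro divide_left_mono) (auto simp: power3_eq_cube)
qed

lemma stirling_limit:
  obtains L where "sr \<longlonglongrightarrow> L" "\<And>m. m \<ge> 1 \<Longrightarrow> \<bar>sr m - L\<bar> \<le> TT m / 10"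
proof -
  define U where "U i = sr (Suc i) - TT (Suc i) / 10" for i
  define V where "V i = sr (Suc i) + TT (Suc i) / 10" for i
  have Ustep: "U i \<le> U (Suc i)" for i
    using sr_step_bound[of "Suc i"] unfolding U_def abs_le_iff by (simp add: field_simps)
  have Vstep: "V (Suc i) \<le> V i" for i
    using sr_step_bound[of "Suc i"] unfolding V_def abs_le_iff by (simp add: field_simps)
  have inc: "incseq U" by (rule incseq_SucI) (rule Ustep)
  have dec: "decseq V" by (rule decseq_SucI) (rule Vstep)
  have UV: "U i \<le> V i" for i unfolding U_def V_def using TT_pos[of "Suc i"] by simp
  have bnd: "\<forall>i. U i \<le> V 0"
  proof
    fix i have "V i \<le> V 0" using dec by (simp add: decseq_def)
    thus "U i \<le> V 0" using UV[of i] by simp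
  qed
  obtain L where UL: "U \<longlonglongrightarrow> L" and "\<forall>i. U i \<le> L" using incseq_convergent[OF inc bnd] by blast
  have T0: "(\<lambda>i. TT (Suc i)) \<longlonglongrightarrow> 0"
  proof (rule real_tendsto_sandwich[where f = "\<lambda>_. 0" and h = "\<lambda>i. inverse (real (Suc i))"])
    show "\<forall>\<^sub>F i in sequentially. 0 \<le> TT (Suc i)" using TT_pos by (intro always_eventually allI less_imp_le) auto
    show "\<forall>\<^sub>F i in sequentially. TT (Suc i) \<le> inverse (real (Suc i))"
    proof (intro always_eventually allI)
      fix i
      have "TT (Suc i) \<le> 1 / real (Suc i) ^ 3" by (rule TT_le) simp
      also have "\<dots> \<le> 1 / real (Suc i)"
      proof (intro divide_left_mono)
        have "1 * 1 \<le> real (Suc i) * real (Suc i)" by (intro mult_mono) auto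
        hence "real (Suc i) * 1 \<le> real (Suc i) * (real (Suc i) * real (Suc i))"
          by (intro mult_left_mono) auto
        thus "real (Suc i) \<le> real (Suc i) ^ 3" by (simp add: power3_eq_cube)
      qed auto
      finally show "TT (Suc i) \<le> inverse (real (Suc i))" by (simp add: divide_inverse)
    qed
  qed (use LIMSEQ_inverse_real_of_nat in simp_all)
  have SL: "(\<lambda>i. sr (Suc i)) \<longlonglongrightarrow> L"
  proof -
    have "(\<lambda>i. U i + TT (Suc i) / 10) \<longlonglongrightarrow> L + 0 / 10" by (intro tendsto_add UL tendsto_divide T0 tendsto_const) simp
    thus ?thesis unfolding U_def by simp
  qed
  hence S: "sr \<longlonglongrightarrow> L" by (simp only: filterlim_sequentially_Suc)
  have VL: "V \<longlonglongrightarrow> L"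
  proof -
    have "(\<lambda>i. sr (Suc i) + TT (Suc i) / 10) \<longlonglongrightarrow> L + 0 / 10" by (intro tendsto_add SL tendsto_divide T0 tendsto_const) simp
    thus ?thesis unfolding V_def by simp
  qed
  show ?thesis
  proof (rule that[OF S])
    fix m :: nat assume m: "m \<ge> 1"
    then obtain i where i: "m = Suc i" by (cases m) auto
    have "U i \<le> L" by (rule incseq_le[OF inc UL])
    moreover have "L \<le> V i" by (rule decseq_ge[OF dec VL])
    ultimately show "\<bar>sr m - L\<bar> \<le> TT m / 10" unfolding i U_def V_def abs_le_iff by (simp add: field_simps)
  qed
qed

lemma wallis_aux: fixes a b c r W F :: real assumes "a \<noteq> 0" "b \<noteq> 0"
  shows "W * (r / (a * b)) * (c * a * F)^2 * b = (W * F^2 * a) * (r * c^2)"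
  using assms by (simp add: field_simps power2_eq_square)

lemma wallis_fact:
  "(\<Prod>k=1..N. 4 * (real k)^2 / (4 * (real k)^2 - 1)) * (fact (2*N))^2 * (2 * real N + 1) = 2^(4*N) * (fact N)^4"
proof (induction N)
  case 0 show ?case by simp
next
  case (Suc N)
  define W where "W = (\<Prod>k=1..N. 4 * (real k)^2 / (4 * (real k)^2 - 1))"
  define F2 where "F2 = (fact (2*N) :: real)"
  define F1 where "F1 = (fact N :: real)"
  have IH: "W * F2^2 * (2 * real N + 1) = 2^(4*N) * F1^4" using Suc.IH unfolding W_def F2_def F1_def .
  have d: "4 * (real (Suc N))^2 - 1 = (2 * real N + 1) * (2 * real N + 3)"
    by (simp add: algebra_simps power2_eq_square)
  have P: "(\<Prod>k=1..Suc N. 4 * (real k)^2 / (4 * (real k)^2 - 1)) = W * (4 * (real N + 1)^2 / ((2 * real N + 1) * (2 * real N + 3)))"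
    unfolding W_def d[symmetric] by (simp add: prod.nat_ivl_Suc' mult.commute)
  have ff: "2 * Suc N = Suc (Suc (2 * N))" by simp
  have F: "(fact (2 * Suc N) :: real) = (2 * real N + 2) * (2 * real N + 1) * F2"
    unfolding ff F2_def by (simp add: algebra_simps)
  have F1s: "(fact (Suc N) :: real) = (real N + 1) * F1" unfolding F1_def by (simp add: algebra_simps)
  have pw: "(2::real)^(4 * Suc N) = 16 * 2^(4*N)" by (simp add: power_add)
  have "W * (4 * (real N + 1)^2 / ((2 * real N + 1) * (2 * real N + 3))) * ((2 * real N + 2) * (2 * real N + 1) * F2)^2 * (2 * real (Suc N) + 1)
      = (W * F2^2 * (2 * real N + 1)) * (4 * (real N + 1)^2 * (2 * real N + 2)^2)"
  proof -
    have nz: "(2 * real N + 1) \<noteq> 0" "(2 * real N + 3) \<noteq> 0" by (simp_all add: add_nonneg_eq_0_iff)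
    have e: "2 * real (Suc N) + 1 = 2 * real N + 3" by simp
    show ?thesis unfolding e by (rule wallis_aux[OF nz])
  qed
  also have "\<dots> = 2^(4 * Suc N) * ((real N + 1) * F1)^4"
    unfolding IH pw by (simp add: power2_eq_square power4_eq_xxxx algebra_simps)
  finally show ?case unfolding P F F1s .
qed

definition WW :: "nat \<Rightarrow> real" where "WW N = (\<Prod>k=1..N. 4 * (real k)^2 / (4 * (real k)^2 - 1))"

lemma ln_WW: assumes "N \<ge> 1"
  shows "ln (WW N) = 4 * sr N - 2 * sr (2*N) - ln 2 + (ln (real N) - ln (2 * real N + 1)) + 1 / (4 * real N)"
proof -
  define F1 where "F1 = (fact N :: real)"
  define F2 where "F2 = (fact (2*N) :: real)"
  have N0: "real N > 0" using assms by simp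
  have F1p: "F1 > 0" "F2 > 0" unfolding F1_def F2_def by simp_all
  have nz: "F2^2 * (2 * real N + 1) \<noteq> 0" using F1p N0 by simp
  have "WW N * (F2^2 * (2 * real N + 1)) = 2^(4*N) * F1^4"
    using wallis_fact[of N] unfolding WW_def F1_def F2_def by (simp add: mult.assoc)
  hence W: "WW N = 2^(4*N) * F1^4 / (F2^2 * (2 * real N + 1))"
    using nz by (simp add: eq_divide_eq)
  have lnW: "ln (WW N) = real (4*N) * ln 2 + 4 * ln F1 - (2 * ln F2 + ln (2 * real N + 1))"
    unfolding W using F1p N0
    by (simp add: ln_div ln_mult ln_realpow)
  define A where "A = ln (real N)"
  define c0 where "c0 = 1 / (12 * real N)"
  have l1: "ln F1 = sr N + ((real N + 1/2) * A - real N + c0)" unfolding sr_def F1_def A_def c0_def by simp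
  have l2: "ln F2 = sr (2*N) + ((2 * real N + 1/2) * (ln 2 + A) - 2 * real N + c0 / 2)"
  proof -
    have "ln (real (2*N)) = ln 2 + A" unfolding A_def using N0 by (simp add: ln_mult)
    moreover have "1 / (12 * real (2*N)) = c0 / 2" unfolding c0_def by simp
    ultimately show ?thesis unfolding sr_def F2_def by simp
  qed
  have c0': "1 / (4 * real N) = 3 * c0" unfolding c0_def by simp
  show ?thesis unfolding lnW l1 l2 c0' unfolding A_def[symmetric] by (simp add: field_simps)
qed

lemma N_over: "(\<lambda>N. ln (real N) - ln (2 * real N + 1)) \<longlonglongrightarrow> ln (1/2)"
proof -
  have "(\<lambda>N. ln (1 / (2 + inverse (real N)))) \<longlonglongrightarrow> ln (1 / (2 + 0))"
    by (intro tendsto_intros lim_inverse_n) auto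
  moreover have "eventually (\<lambda>N. ln (1 / (2 + inverse (real N))) = ln (real N) - ln (2 * real N + 1)) sequentially"
    using eventually_ge_at_top[of "1::nat"]
  proof eventually_elim
    case (elim N)
    hence N0: "real N > 0" by simp
    have "1 / (2 + inverse (real N)) = real N / (2 * real N + 1)" using N0 by (simp add: field_simps)
    thus ?case using N0 by (simp add: ln_div)
  qed
  ultimately show ?thesis by (simp add: Lim_transform_eventually)
qed

lemma stirling_const: "sr \<longlonglongrightarrow> ln (2 * pi) / 2"
proof -
  obtain L where L: "sr \<longlonglongrightarrow> L" and "\<And>m. m \<ge> 1 \<Longrightarrow> \<bar>sr m - L\<bar> \<le> TT m / 10" using stirling_limit by blast
  have L2: "(\<lambda>N. sr (2*N)) \<longlonglongrightarrow> L"
    using LIMSEQ_subseq_LIMSEQ[OF L, of "\<lambda>N. 2*N"] by (simp add: strict_mono_def o_def)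
  have R: "(\<lambda>N. 4 * sr N - 2 * sr (2*N) - ln 2 + (ln (real N) - ln (2 * real N + 1)) + 1 / (4 * real N))
       \<longlonglongrightarrow> 4 * L - 2 * L - ln 2 + ln (1/2) + 0"
  proof -
    have T: "(\<lambda>N. 1 / (4 * real N)) \<longlonglongrightarrow> 0"
      using tendsto_mult[OF tendsto_const[of "1/4"] lim_inverse_n] by (simp add: inverse_eq_divide)
    show ?thesis by (intro tendsto_add tendsto_diff tendsto_mult_left L L2 N_over T tendsto_const)
  qed
  have "eventually (\<lambda>N. 4 * sr N - 2 * sr (2*N) - ln 2 + (ln (real N) - ln (2 * real N + 1)) + 1 / (4 * real N) = ln (WW N)) sequentially"
    using eventually_ge_at_top[of "1::nat"] by eventually_elim (simp add: ln_WW)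
  from Lim_transform_eventually[OF R this]
  have A: "(\<lambda>N. ln (WW N)) \<longlonglongrightarrow> 4 * L - 2 * L - ln 2 + ln (1/2) + 0" .
  have B: "(\<lambda>N. ln (WW N)) \<longlonglongrightarrow> ln (pi / 2)"
    unfolding WW_def by (intro tendsto_intros wallis) simp
  have "4 * L - 2 * L - ln 2 + ln (1/2) + 0 = ln (pi / 2)" using LIMSEQ_unique[OF A B] .
  hence eq: "L = ln (2 * pi) / 2" by (simp add: ln_div ln_mult)
  show ?thesis using L unfolding eq .
qed

lemma stirling: assumes "m \<ge> 1"
  shows "\<bar>ln (fact m) - ((real m + 1/2) * ln (real m) - real m + ln (2 * pi) / 2 + 1 / (12 * real m))\<bar> \<le> 1 / (10 * real m ^ 3)"
proof -
  obtain L where L: "sr \<longlonglongrightarrow> L" and b: "\<And>m. m \<ge> 1 \<Longrightarrow> \<bar>sr m - L\<bar> \<le> TT m / 10" using stirling_limit by blast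
  have "L = ln (2 * pi) / 2" using LIMSEQ_unique[OF L stirling_const] .
  hence "\<bar>ln (fact m) - ((real m + 1/2) * ln (real m) - real m + ln (2 * pi) / 2 + 1 / (12 * real m))\<bar> = \<bar>sr m - L\<bar>"
    unfolding sr_def by (simp add: algebra_simps)
  also have "\<dots> \<le> TT m / 10" by (rule b[OF assms])
  also have "\<dots> \<le> (1 / real m ^ 3) / 10" using TT_le[OF assms] by simp
  finally show ?thesis by simp
qed

lemma info_eq: assumes "k \<le> n"
  shows "binom_info n k = real n * ln 2 - ln (fact n) + ln (fact k) + ln (fact (n - k))"
proof -
  have p: "pmf (binomial_pmf n (1/2)) k = real (n choose k) / 2^n"
  proof -
    have "pmf (binomial_pmf n (1/2)) k = real (n choose k) * (1/2)^k * (1 - 1/2)^(n-k)"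
      by (rule pmf_binomial) auto
    also have "(1/2::real)^k * (1 - 1/2)^(n-k) = (1/2)^n" using assms by (simp add: power_add[symmetric])
    hence "real (n choose k) * (1/2::real)^k * (1 - 1/2)^(n-k) = real (n choose k) / 2^n"
      by (simp add: power_divide mult.assoc)
    finally show ?thesis .
  qed
  have c: "real (n choose k) = fact n / (fact k * fact (n - k))" using binomial_fact[OF assms] by simp
  have cpos: "real (n choose k) > 0" using assms by simp
  have "binom_info n k = ln (2^n / real (n choose k))" unfolding binom_info_def p by simp
  also have "\<dots> = ln (2^n) - ln (real (n choose k))" using cpos by (simp add: ln_div)
  also have "ln (real (n choose k)) = ln (fact n) - (ln (fact k) + ln (fact (n - k)))"
    unfolding c by (simp add: ln_div ln_mult)
  also have "ln ((2::real)^n) = real n * ln 2" by (simp add: ln_realpow)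
  finally show ?thesis by simp
qed

definition Sf :: "real \<Rightarrow> real" where
  "Sf m = (m + 1/2) * ln m - m + ln (2 * pi) / 2 + 1 / (12 * m)"

definition rr :: "nat \<Rightarrow> real" where "rr m = ln (fact m) - Sf (real m)"

lemma rr_bound: "m \<ge> 1 \<Longrightarrow> \<bar>rr m\<bar> \<le> 1 / (10 * real m ^ 3)"
  using stirling[of m] unfolding rr_def Sf_def by simp

definition xx :: "nat \<Rightarrow> nat \<Rightarrow> real" where "xx n k = 2 * DD n k / real n"

definition an :: "nat \<Rightarrow> real" where "an n = real n / 2 - 1/2 + 1 / (3 * real n)"
definition bn :: "nat \<Rightarrow> real" where "bn n = real n / 12 - 1/4"
definition cn :: "nat \<Rightarrow> real" where "cn n = real n / 30"

definition gg :: "nat \<Rightarrow> nat \<Rightarrow> real" where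
  "gg n k = an n * xx n k ^ 2 + bn n * xx n k ^ 4 + cn n * xx n k ^ 6"

definition AA :: "nat \<Rightarrow> real" where "AA n = ln (pi * real n / 2) / 2 + 1 / (4 * real n)"

lemma decomp:
  assumes "0 < k" "k < n"
  shows "binom_info n k = AA n + gg n k +
    (real n / 2 * hfun (xx n k) + lfun (xx n k) / 2 + xx n k ^ 4 / (3 * real n * (1 - xx n k ^ 2))
     + (rr k + rr (n - k) - rr n))"
proof -
  define x where "x = xx n k"
  define N where "N = real n"
  define K where "K = real k"
  define M where "M = real (n - k)"
  have N0: "N > 0" and K0: "K > 0" and M0: "M > 0" using assms unfolding N_def K_def M_def by auto
  have NKM: "N = K + M" using assms unfolding N_def K_def M_def by simp
  have xd: "x = (K - M) / N" unfolding x_def xx_def DD_def N_def K_def M_def using assms by (simp add: field_simps)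
  have opx: "1 + x = 2 * K / N" unfolding xd NKM using N0 NKM by (simp add: field_simps)
  have omx: "1 - x = 2 * M / N" unfolding xd NKM using N0 NKM by (simp add: field_simps)
  define a where "a = ln K"
  define b where "b = ln M"
  define c where "c = ln N"
  define t where "t = ln (2::real)"
  define p where "p = ln pi"
  define u where "u = ln (1 + x)"
  define v where "v = ln (1 - x)"
  define w where "w = 1 / (1 - x^2)"
  have u: "u = t + a - c" unfolding u_def opx t_def a_def c_def using N0 K0 by (simp add: ln_div ln_mult)
  have v: "v = t + b - c" unfolding v_def omx t_def b_def c_def using N0 M0 by (simp add: ln_div ln_mult)
  have omx2: "1 - x^2 = (1 + x) * (1 - x)" by (simp add: algebra_simps power2_eq_square)
  have pos: "1 + x > 0" "1 - x > 0" unfolding opx omx using N0 K0 M0 by auto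
  have lnx2: "ln (1 - x^2) = u + v" unfolding omx2 u_def v_def using pos by (simp add: ln_mult)
  have wN: "w = N^2 / (4 * K * M)"
    unfolding w_def omx2 opx omx using N0 K0 M0 by (simp add: field_simps power2_eq_square)
  have w3: "1 / (12 * K) + 1 / (12 * M) = w / (3 * N)"
  proof -
    have "1 / (12 * K) + 1 / (12 * M) = (K + M) / (12 * K * M)" using K0 M0 by (simp add: field_simps)
    moreover have "w / (3 * N) = N / (12 * K * M)" unfolding wN using N0 K0 M0 by (simp add: field_simps power2_eq_square)
    ultimately show ?thesis using NKM by simp
  qed
  have wx: "w = 1 + x^2 + x^4 * w"
  proof -
    have "w * (1 - x^2) = 1" unfolding w_def omx2 using pos by simp
    hence h: "w = 1 + w * x^2" by (simp add: algebra_simps)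
    have "w * x^2 = (1 + w * x^2) * x^2" using h by (rule arg_cong)
    hence "w * x^2 = x^2 + w * x^4" by (simp add: algebra_simps power2_eq_square power4_eq_xxxx)
    thus ?thesis using h by (simp add: algebra_simps)
  qed
  have lpn: "ln (pi * N / 2) = p + c - t" unfolding p_def c_def t_def using N0 by (simp add: ln_div ln_mult)
  have l2p: "ln (2 * pi) = t + p" unfolding p_def t_def by (simp add: ln_mult)
  have info: "binom_info n k = N * t - Sf N + Sf K + Sf M + (rr k + rr (n - k) - rr n)"
    unfolding info_eq[OF less_imp_le[OF assms(2)]] rr_def N_def K_def M_def t_def by simp
  have stepB: "N * t - Sf N + Sf K + Sf M = (p + c - t) / 2 + (K * u + M * v) + (u + v) / 2 - 1 / (12 * N) + w / (3 * N)"
  proof -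
    have "N * t - Sf N + Sf K + Sf M = N * t - ((N + 1/2) * c - N + (t + p) / 2 + 1 / (12 * N))
       + ((K + 1/2) * a - K + (t + p) / 2) + ((M + 1/2) * b - M + (t + p) / 2) + (1 / (12 * K) + 1 / (12 * M))"
      unfolding Sf_def l2p a_def b_def c_def by simp
    also have "\<dots> = (p + c - t) / 2 + (K * u + M * v) + (u + v) / 2 - 1 / (12 * N) + w / (3 * N)"
      unfolding w3 u v NKM by (simp add: field_simps)
    finally show ?thesis .
  qed
  have stepC: "K * u + M * v = N / 2 * (hfun x + x^2 + x^4/6 + x^6/15)"
  proof -
    have k: "K = N / 2 * (1 + x)" unfolding opx using N0 by simp
    have m: "M = N / 2 * (1 - x)" unfolding omx using N0 by simp
    show ?thesis unfolding hfun_def u_def[symmetric] v_def[symmetric] unfolding k m by (simp add: field_simps)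
  qed
  have stepD: "(u + v) / 2 = (lfun x - x^2 - x^4/2) / 2" unfolding lfun_def lnx2 by simp
  have stepE: "w / (3 * N) = (1 + x^2) / (3 * N) + x^4 / (3 * N * (1 - x^2))"
  proof -
    have "w / (3 * N) = (1 + x^2 + x^4 * w) / (3 * N)" using wx by simp
    also have "\<dots> = (1 + x^2) / (3 * N) + x^4 * w / (3 * N)" by (simp add: add_divide_distrib)
    also have "x^4 * w / (3 * N) = x^4 / (3 * N * (1 - x^2))" unfolding w_def by (simp add: mult.commute)
    finally show ?thesis .
  qed
  have final: "(p + c - t) / 2 + N / 2 * (hfun x + x^2 + x^4/6 + x^6/15) + (lfun x - x^2 - x^4/2) / 2 - 1 / (12 * N)
      + ((1 + x^2) / (3 * N) + x^4 / (3 * N * (1 - x^2)))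
      = (p + c - t) / 2 + 1 / (4 * N) + ((N / 2 - 1/2 + 1 / (3 * N)) * x^2 + (N / 12 - 1/4) * x^4 + N / 30 * x^6)
        + (N / 2 * hfun x + lfun x / 2 + x^4 / (3 * N * (1 - x^2)))"
    using N0 by (simp add: field_simps)
  show ?thesis
    unfolding info stepB stepC stepD stepE
    unfolding AA_def gg_def an_def bn_def cn_def x_def[symmetric] N_def[symmetric] lpn
    using final by (simp add: algebra_simps)
qed

definition ee :: "nat \<Rightarrow> nat \<Rightarrow> real" where "ee n k = binom_info n k - AA n - gg n k"

lemma xx_sq: "n \<ge> 1 \<Longrightarrow> xx n k ^ 2 = YY n k / real n"
  unfolding xx_def YY_def by (simp add: power2_eq_square field_simps)

lemma xx_pow: assumes "n \<ge> 1" shows "xx n k ^ (2*j) = YY n k ^ j / real n ^ j"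
proof -
  have "xx n k ^ (2*j) = (xx n k ^ 2) ^ j" by (simp add: power_mult)
  thus ?thesis using xx_sq[OF assms] by (simp add: power_divide)
qed

lemma xx_abs: assumes "k \<le> n" "n \<ge> 1" shows "\<bar>xx n k\<bar> \<le> 1"
  using assms unfolding xx_def DD_def by (auto simp: abs_le_iff field_simps)

lemma Y_pows: fixes Y :: real assumes "Y \<ge> 0" shows "Y^2 \<le> 1 + Y^4" "Y^3 \<le> 1 + Y^4" "Y \<le> 1 + Y^4"
proof -
  have "Y^2 \<le> 1 + Y^4 \<and> Y^3 \<le> 1 + Y^4 \<and> Y \<le> 1 + Y^4"
  proof (cases "Y \<le> 1")
    case True
    have "Y^2 \<le> 1" "Y^3 \<le> 1" using True assms by (auto intro: power_le_one)
    thus ?thesis using True assms by (auto intro: add_increasing2)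
  next
    case False
    have a: "Y^2 \<le> Y^4" "Y^3 \<le> Y^4" using False by (auto intro: power_increasing)
    have "Y^1 \<le> Y^4" by (rule power_increasing) (use False in auto)
    thus ?thesis using a by auto
  qed
  thus "Y^2 \<le> 1 + Y^4" "Y^3 \<le> 1 + Y^4" "Y \<le> 1 + Y^4" by auto
qed

lemma abs_sum6: fixes a b c d e f A B C D E F :: real
  assumes "\<bar>a\<bar> \<le> A" "\<bar>b\<bar> \<le> B" "\<bar>c\<bar> \<le> C" "\<bar>d\<bar> \<le> D" "\<bar>e\<bar> \<le> E" "\<bar>f\<bar> \<le> F"
  shows "\<bar>a + b + c + (d + e - f)\<bar> \<le> A + B + C + (D + E + F)"
  using assms unfolding abs_le_iff by linarith

lemma ee_central: assumes n: "n \<ge> 8" and k: "k \<le> n" and x: "\<bar>xx n k\<bar> \<le> 1/2"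
  shows "\<bar>ee n k\<bar> \<le> 17 * (1 + YY n k ^ 4) / real n ^ 3"
proof -
  define X where "X = xx n k"
  define Y where "Y = YY n k"
  define N where "N = real n"
  have N8: "N \<ge> 8" using n unfolding N_def by simp
  have Y0: "Y \<ge> 0" unfolding Y_def by (rule YY_nonneg)
  have kq: "real k \<ge> N / 4" and nkq: "real (n - k) \<ge> N / 4"
  proof -
    have "\<bar>2 * (real k - N / 2) / N\<bar> \<le> 1/2" using x unfolding xx_def DD_def N_def .
    hence "2 * (real k - N / 2) / N \<le> 1/2" "- (2 * (real k - N / 2) / N) \<le> 1/2" by (simp_all only: abs_le_iff)
    hence h: "4 * real k \<le> 3 * N" "N \<le> 4 * real k" using N8 by (simp_all add: field_simps)
    have "real (n - k) = N - real k" using k unfolding N_def by (simp add: of_nat_diff)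
    thus "real k \<ge> N / 4" "real (n - k) \<ge> N / 4" using h by (simp_all add: field_simps)
  qed
  have k0: "0 < k" and kn: "k < n" using kq nkq N8 k by (auto simp: N_def)
  have eeq: "ee n k = N / 2 * hfun X + lfun X / 2 + X^4 / (3 * N * (1 - X^2)) + (rr k + rr (n - k) - rr n)"
    unfolding ee_def decomp[OF k0 kn] X_def N_def by simp
  have X2: "X^2 = Y / N" unfolding X_def Y_def N_def using xx_sq n by simp
  have X4: "X^4 = Y^2 / N^2" using xx_pow[of n k 2] n unfolding X_def Y_def N_def by simp
  have X6: "X^6 = Y^3 / N^3" using xx_pow[of n k 3] n unfolding X_def Y_def N_def by simp
  have X8: "X^8 = Y^4 / N^4" using xx_pow[of n k 4] n unfolding X_def Y_def N_def by simp
  have Xh: "\<bar>X\<bar> \<le> 1/2" using x unfolding X_def .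
  have b1: "\<bar>N / 2 * hfun X\<bar> \<le> Y^4 / N^3"
  proof -
    have "\<bar>N / 2 * hfun X\<bar> = N / 2 * \<bar>hfun X\<bar>" using N8 by (simp add: abs_mult)
    also have "\<dots> \<le> N / 2 * (3 * X^8 / 56)" using hfun_bound[OF Xh] N8 by (intro mult_left_mono) auto
    also have "\<dots> \<le> N * X^8" using N8 by (simp add: field_simps)
    also have "\<dots> = Y^4 / N^3" unfolding X8 using N8 by (simp add: field_simps power_eq_if)
    finally show ?thesis .
  qed
  have b2: "\<bar>lfun X / 2\<bar> \<le> Y^3 / N^3"
  proof -
    have "\<bar>lfun X / 2\<bar> \<le> X^6 / 2 / 2" using lfun_bound[OF Xh] by simp
    also have "\<dots> \<le> X^6" by simp
    finally show ?thesis unfolding X6 .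
  qed
  have b3: "\<bar>X^4 / (3 * N * (1 - X^2))\<bar> \<le> Y^2 / N^3"
  proof -
    have "\<bar>X\<bar>^2 \<le> (1/2)^2" using Xh by (intro power_mono) auto
    hence X2q: "X^2 \<le> 1/4" by (simp add: power2_eq_square)
    hence d: "3 * N * (1 - X^2) \<ge> N" using N8 by (simp add: algebra_simps)
    have dpos: "3 * N * (1 - X^2) > 0" using d N8 by simp
    have "\<bar>X^4 / (3 * N * (1 - X^2))\<bar> = X^4 / (3 * N * (1 - X^2))" using dpos by simp
    also have "\<dots> \<le> X^4 / N" using d N8 by (intro divide_left_mono) auto
    also have "\<dots> = Y^2 / N^3" unfolding X4 using N8 by (simp add: field_simps power_eq_if)
    finally show ?thesis .
  qed
  have rk: "\<bar>rr k\<bar> \<le> 7 / N^3"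
  proof -
    have "\<bar>rr k\<bar> \<le> 1 / (10 * real k ^ 3)" using rr_bound k0 by simp
    also have "\<dots> \<le> 1 / (10 * (N / 4)^3)" using kq N8 by (intro divide_left_mono mult_left_mono power_mono) auto
    also have "\<dots> \<le> 7 / N^3" using N8 by (simp add: field_simps)
    finally show ?thesis .
  qed
  have rnk: "\<bar>rr (n - k)\<bar> \<le> 7 / N^3"
  proof -
    have "n - k \<ge> 1" using kn by simp
    hence "\<bar>rr (n - k)\<bar> \<le> 1 / (10 * real (n - k) ^ 3)" by (rule rr_bound)
    also have "\<dots> \<le> 1 / (10 * (N / 4)^3)" using nkq N8 by (intro divide_left_mono mult_left_mono power_mono) auto
    also have "\<dots> \<le> 7 / N^3" using N8 by (simp add: field_simps)
    finally show ?thesis .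
  qed
  have rn: "\<bar>rr n\<bar> \<le> 1 / N^3"
  proof -
    have "\<bar>rr n\<bar> \<le> 1 / (10 * N ^ 3)" using rr_bound n unfolding N_def by simp
    also have "\<dots> \<le> 1 / N^3" using N8 by (simp add: field_simps)
    finally show ?thesis .
  qed
  have "\<bar>ee n k\<bar> \<le> Y^4 / N^3 + Y^3 / N^3 + Y^2 / N^3 + (7 / N^3 + 7 / N^3 + 1 / N^3)"
    unfolding eeq by (rule abs_sum6[OF b1 b2 b3 rk rnk rn])
  also have "\<dots> = (Y^4 + Y^3 + Y^2 + 15) / N^3" by (simp add: add_divide_distrib)
  also have "\<dots> \<le> 17 * (1 + Y^4) / N^3"
  proof (rule divide_right_mono)
    have "0 \<le> Y^4" using Y0 by simp
    thus "Y^4 + Y^3 + Y^2 + 15 \<le> 17 * (1 + Y^4)" using Y_pows[OF Y0] by argo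
  qed (use N8 in simp)
  finally show ?thesis unfolding Y_def N_def .
qed

lemma info_bounds: assumes "k \<le> n" shows "0 \<le> binom_info n k" "binom_info n k \<le> real n"
proof -
  have p: "pmf (binomial_pmf n (1/2)) k = real (n choose k) / 2^n"
  proof -
    have "pmf (binomial_pmf n (1/2)) k = real (n choose k) * (1/2)^k * (1 - 1/2)^(n-k)"
      by (rule pmf_binomial) auto
    also have "(1/2::real)^k * (1 - 1/2)^(n-k) = (1/2)^n" using assms by (simp add: power_add[symmetric])
    hence "real (n choose k) * (1/2::real)^k * (1 - 1/2)^(n-k) = real (n choose k) / 2^n"
      by (simp add: power_divide mult.assoc)
    finally show ?thesis .
  qed
  have c1: "real (n choose k) \<ge> 1" using assms by (simp add: Suc_leI)
  have c2: "real (n choose k) \<le> 2^n"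
  proof -
    have "real (n choose k) \<le> real (2^n)" by (subst of_nat_le_iff) (rule binomial_le_pow2)
    thus ?thesis by simp
  qed
  have "binom_info n k = ln (2^n / real (n choose k))" unfolding binom_info_def p by simp
  also have "\<dots> = ln (2^n) - ln (real (n choose k))" using c1 assms by (subst ln_div) auto
  also have "ln ((2::real)^n) = real n * ln 2" by (rule ln_realpow)
  finally have eq: "binom_info n k = real n * ln 2 - ln (real (n choose k))" .
  have "ln (real (n choose k)) \<ge> 0" using c1 by simp
  moreover have "ln (real (n choose k)) \<le> real n * ln 2"
  proof -
    have "ln (real (n choose k)) \<le> ln (2^n)" using c1 c2 assms by (subst ln_le_cancel_iff) auto
    thus ?thesis by (simp add: ln_realpow)
  qed
  moreover have "real n * ln 2 \<le> real n" using ln_2_less_1 by (intro mult_left_le) auto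
  ultimately show "0 \<le> binom_info n k" "binom_info n k \<le> real n" unfolding eq by auto
qed

lemma AA_bound: assumes "n \<ge> 1" shows "\<bar>AA n\<bar> \<le> 2 * real n"
proof -
  have N1: "real n \<ge> 1" using assms by simp
  have "pi * real n \<ge> 3 * 1" using pi_gt3 N1 by (intro mult_mono) auto
  hence pi1: "pi * real n / 2 \<ge> 1" by simp
  have l0: "ln (pi * real n / 2) \<ge> 0" using pi1 by simp
  have l1: "ln (pi * real n / 2) \<le> pi * real n / 2 - 1" using pi1 by (intro ln_le_minus_one) auto
  have "pi * real n \<le> 4 * real n" using pi_less_4 N1 by (intro mult_right_mono) auto
  hence "pi * real n / 2 - 1 \<le> 2 * real n" by simp
  hence a: "0 \<le> ln (pi * real n / 2) / 2" "ln (pi * real n / 2) / 2 \<le> real n" using l0 l1 by auto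
  have nn: "1 \<le> real n * real n" using mult_mono[OF N1 N1] by simp
  have b: "0 \<le> 1 / (4 * real n)" "1 / (4 * real n) \<le> real n" using N1 nn by (auto simp: field_simps)
  show ?thesis unfolding AA_def using a b by (simp add: abs_le_iff)
qed

lemma gg_bound: assumes "n \<ge> 1" "k \<le> n" shows "\<bar>gg n k\<bar> \<le> 3 * YY n k"
proof -
  define X where "X = xx n k"
  have N1: "real n \<ge> 1" using assms by simp
  have X1: "\<bar>X\<bar> \<le> 1" unfolding X_def using xx_abs assms by simp
  have X2: "X^2 \<le> 1" using X1 by (simp add: abs_square_le_1)
  have X4: "X^4 \<le> X^2" "X^6 \<le> X^2"
  proof -
    have "X^4 = X^2 * X^2" "X^6 = X^2 * X^2 * X^2" by (simp_all add: power_eq_if)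
    moreover have "X^2 * X^2 \<le> X^2 * 1" using X2 by (intro mult_left_mono) auto
    moreover have "X^2 * X^2 * X^2 \<le> 1 * 1 * X^2" using X2 by (intro mult_right_mono mult_mono) auto
    ultimately show "X^4 \<le> X^2" "X^6 \<le> X^2" by auto
  qed
  have i3: "0 \<le> 1 / (3 * real n)" "1 / (3 * real n) \<le> 1" using N1 by (auto simp: field_simps)
  have ab: "\<bar>an n\<bar> \<le> real n" "\<bar>bn n\<bar> \<le> real n" "\<bar>cn n\<bar> \<le> real n"
    unfolding an_def bn_def cn_def abs_le_iff using N1 i3 by argo+
  have "\<bar>gg n k\<bar> \<le> \<bar>an n\<bar> * X^2 + \<bar>bn n\<bar> * X^4 + \<bar>cn n\<bar> * X^6"
    unfolding gg_def X_def[symmetric] by (rule order_trans[OF abs_triangle_ineq] add_mono | simp add: abs_mult)+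
  also have "\<dots> \<le> real n * X^2 + real n * X^2 + real n * X^2"
    using ab X4 N1 by (intro add_mono mult_mono) auto
  also have "\<dots> = 3 * (real n * X^2)" by simp
  also have "real n * X^2 = YY n k" unfolding X_def using xx_sq[of n k] assms N1 by simp
  finally show ?thesis .
qed

lemma ee_tail: assumes n: "n \<ge> 8" and k: "k \<le> n" and x: "\<bar>xx n k\<bar> > 1/2"
  shows "\<bar>ee n k\<bar> \<le> 1536 * YY n k ^ 4 / real n ^ 3"
proof -
  define Y where "Y = YY n k"
  define N where "N = real n"
  have N8: "N \<ge> 8" using n unfolding N_def by simp
  have e6: "\<bar>ee n k\<bar> \<le> 6 * N"
  proof -
    have "\<bar>ee n k\<bar> \<le> \<bar>binom_info n k\<bar> + \<bar>AA n\<bar> + \<bar>gg n k\<bar>" unfolding ee_def by linarith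
    also have "\<dots> \<le> N + 2 * N + 3 * N"
    proof -
      have "\<bar>gg n k\<bar> \<le> 3 * Y" using gg_bound n k unfolding Y_def by simp
      also have "Y \<le> N"
      proof -
        have "Y = N * xx n k ^ 2" unfolding Y_def N_def using xx_sq[of n k] n by simp
        also have "\<dots> \<le> N * 1" using xx_abs[OF k] n N8 by (intro mult_left_mono) (auto simp: abs_square_le_1)
        finally show ?thesis by simp
      qed
      finally have "\<bar>gg n k\<bar> \<le> 3 * N" by simp
      thus ?thesis using info_bounds[OF k] AA_bound[of n] n unfolding N_def by auto
    qed
    finally show ?thesis by simp
  qed
  have YN: "Y \<ge> N / 4"
  proof -
    have "\<bar>xx n k\<bar>^2 \<ge> (1/2)^2" using x by (intro power_mono) auto
    hence "xx n k ^ 2 \<ge> 1/4" by (simp add: power2_eq_square)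
    moreover have "Y = N * xx n k ^ 2" unfolding Y_def N_def using xx_sq[of n k] n by simp
    ultimately show ?thesis using N8 by (simp add: field_simps)
  qed
  have "(N / 4)^4 \<le> Y^4" using YN N8 by (intro power_mono) auto
  hence "N^4 \<le> 256 * Y^4" by (simp add: field_simps)
  hence "6 * N * N^3 \<le> 1536 * Y^4" by (simp add: power_eq_if algebra_simps) 
  hence "6 * N \<le> 1536 * Y^4 / N^3" using N8 by (simp add: field_simps)
  thus ?thesis using e6 unfolding Y_def N_def by simp
qed

lemma ee_bound: assumes n: "n \<ge> 8" and k: "k \<le> n"
  shows "\<bar>ee n k\<bar> \<le> 1536 * (1 + YY n k ^ 4) / real n ^ 3"
proof (cases "\<bar>xx n k\<bar> \<le> 1/2")
  case True
  have "\<bar>ee n k\<bar> \<le> 17 * (1 + YY n k ^ 4) / real n ^ 3" by (rule ee_central[OF n k True])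
  also have "\<dots> \<le> 1536 * (1 + YY n k ^ 4) / real n ^ 3"
    using YY_nonneg[of n k] by (intro divide_right_mono mult_right_mono) auto
  finally show ?thesis .
next
  case False
  hence "\<bar>ee n k\<bar> \<le> 1536 * YY n k ^ 4 / real n ^ 3" using ee_tail[OF n k] by simp
  also have "\<dots> \<le> 1536 * (1 + YY n k ^ 4) / real n ^ 3" by (intro divide_right_mono) auto
  finally show ?thesis .
qed

lemma xx_pow_DD: "xx n k ^ m = (2 / real n)^m * DD n k ^ m"
  unfolding xx_def by (simp add: power_mult_distrib power_divide field_simps)

definition E2 :: "nat \<Rightarrow> real" where "E2 n = 1 / real n"
definition E4 :: "nat \<Rightarrow> real" where "E4 n = (3 * real n ^ 2 - 2 * real n) / real n ^ 4"
definition E6 :: "nat \<Rightarrow> real" where "E6 n = (15 * real n ^ 3 - 30 * real n ^ 2 + 16 * real n) / real n ^ 6"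
definition E8 :: "nat \<Rightarrow> real" where "E8 n = (105 * real n ^ 4 - 420 * real n ^ 3 + 588 * real n ^ 2 - 272 * real n) / real n ^ 8"

lemma Ex: assumes "n \<ge> 1"
  shows "EE n (\<lambda>k. xx n k ^ 2) = E2 n" "EE n (\<lambda>k. xx n k ^ 4) = E4 n"
        "EE n (\<lambda>k. xx n k ^ 6) = E6 n" "EE n (\<lambda>k. xx n k ^ 8) = E8 n"
proof -
  have N: "real n > 0" using assms by simp
  note m = moments[of n]
  show "EE n (\<lambda>k. xx n k ^ 2) = E2 n" unfolding xx_pow_DD EE_cmult E2_def m[THEN conjunct1]
    using N by (simp add: power_divide field_simps power2_eq_square)
  show "EE n (\<lambda>k. xx n k ^ 4) = E4 n" unfolding xx_pow_DD EE_cmult E4_def m[THEN conjunct2, THEN conjunct1]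
    using N by (simp add: power_divide field_simps)
  show "EE n (\<lambda>k. xx n k ^ 6) = E6 n" unfolding xx_pow_DD EE_cmult E6_def m[THEN conjunct2, THEN conjunct2, THEN conjunct1]
    using N by (simp add: power_divide field_simps)
  show "EE n (\<lambda>k. xx n k ^ 8) = E8 n" unfolding xx_pow_DD EE_cmult E8_def m[THEN conjunct2, THEN conjunct2, THEN conjunct2]
    using N by (simp add: power_divide field_simps)
qed

definition KK :: "nat \<Rightarrow> real" where "KK m = 6 * 4^m * fact (2*m)"

lemma KK_nonneg: "KK m \<ge> 0" unfolding KK_def by simp

lemma EY: "n \<ge> 1 \<Longrightarrow> EE n (\<lambda>k. YY n k ^ m) \<le> KK m"
  unfolding KK_def by (rule moment_bound)

lemma EY_nonneg: "EE n (\<lambda>k. YY n k ^ m) \<ge> 0"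
proof -
  have "EE n (\<lambda>k. 0) \<le> EE n (\<lambda>k. YY n k ^ m)" by (rule EE_mono) (simp add: YY_nonneg)
  thus ?thesis by (simp add: EE_const)
qed

lemma Ex_high: assumes "n \<ge> 1"
  shows "EE n (\<lambda>k. xx n k ^ (2*j)) = EE n (\<lambda>k. YY n k ^ j) / real n ^ j"
proof -
  have "(\<lambda>k. xx n k ^ (2*j)) = (\<lambda>k. YY n k ^ j * (1 / real n ^ j))"
    using xx_pow[OF assms] by auto
  hence "EE n (\<lambda>k. xx n k ^ (2*j)) = EE n (\<lambda>k. YY n k ^ j) * (1 / real n ^ j)"
    by (simp only: EE_multc)
  thus ?thesis by simp
qed

lemma EEgg: assumes "n \<ge> 1" shows "EE n (gg n) = an n * E2 n + bn n * E4 n + cn n * E6 n"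
proof -
  have "EE n (gg n) = EE n (\<lambda>k. an n * xx n k ^ 2 + bn n * xx n k ^ 4 + cn n * xx n k ^ 6)"
    unfolding gg_def ..
  also have "\<dots> = an n * E2 n + bn n * E4 n + cn n * E6 n"
    unfolding EE_add EE_cmult Ex[OF assms] ..
  finally show ?thesis .
qed

lemma R1_eq: assumes "n \<ge> 1"
  shows "AA n + EE n (gg n) - (1/2 * ln (pi * exp 1 * real n / 2) - 1 / (12 * (real n)^2))
       = - 1 / (2 * real n ^ 3) + 8 / (15 * real n ^ 4)"
proof -
  have N: "real n > 0" using assms by simp
  have l: "ln (pi * exp 1 * real n / 2) = 1 + ln (pi * real n / 2)"
  proof -
    have "pi * exp 1 * real n / 2 = exp 1 * (pi * real n / 2)" by simp
    also have "ln \<dots> = ln (exp 1) + ln (pi * real n / 2)" using N by (subst ln_mult) auto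
    finally show ?thesis by simp
  qed
  show ?thesis unfolding EEgg[OF assms] l AA_def an_def bn_def cn_def E2_def E4_def E6_def
    using N by (simp add: field_simps) (simp add: algebra_simps power2_eq_square power3_eq_cube power4_eq_xxxx power_eq_if)
qed

lemma EE_info: "EE n (binom_info n) = AA n + EE n (gg n) + EE n (ee n)"
proof -
  have "EE n (binom_info n) = EE n (\<lambda>k. AA n + gg n k + ee n k)"
    by (rule EE_cong) (simp add: ee_def)
  thus ?thesis by (simp add: EE_add EE_const)
qed

lemma EE_ee_abs: assumes "n \<ge> 8"
  shows "EE n (\<lambda>k. \<bar>ee n k\<bar>) \<le> 1536 / real n ^ 3 * (1 + KK 4)"
proof -
  have "EE n (\<lambda>k. \<bar>ee n k\<bar>) \<le> EE n (\<lambda>k. 1536 / real n ^ 3 * (1 + YY n k ^ 4))"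
    by (rule EE_mono) (use ee_bound[OF assms] in simp)
  also have "\<dots> = 1536 / real n ^ 3 * (1 + EE n (\<lambda>k. YY n k ^ 4))" by (simp only: EE_cmult EE_add EE_const)
  also have "\<dots> \<le> 1536 / real n ^ 3 * (1 + KK 4)" using EY[of n 4] assms by (intro mult_left_mono) auto
  finally show ?thesis .
qed

lemma entropy_bound: assumes "n \<ge> 8"
  shows "\<bar>binom_entropy n - (1/2 * ln (pi * exp 1 * real n / 2) - 1 / (12 * (real n)^2))\<bar>
         \<le> (2 + 1536 * (1 + KK 4)) / real n ^ 3"
proof -
  have n1: "n \<ge> 1" using assms by simp
  have N: "real n \<ge> 8" using assms by simp
  have "binom_entropy n - (1/2 * ln (pi * exp 1 * real n / 2) - 1 / (12 * (real n)^2))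
      = (- 1 / (2 * real n ^ 3) + 8 / (15 * real n ^ 4)) + EE n (ee n)"
    using R1_eq[OF n1] unfolding binom_entropy_def EE_expect EE_info by simp
  also have "\<bar>\<dots>\<bar> \<le> 2 / real n ^ 3 + 1536 / real n ^ 3 * (1 + KK 4)"
  proof (rule order_trans[OF abs_triangle_ineq add_mono])
    have "\<bar>- 1 / (2 * real n ^ 3) + 8 / (15 * real n ^ 4)\<bar> \<le> 1 / (2 * real n ^ 3) + 8 / (15 * real n ^ 4)"
      using N by (simp add: abs_le_iff)
    also have "8 / (15 * real n ^ 4) \<le> 1 / real n ^ 3" using N by (simp add: field_simps power_eq_if)
    also have "1 / (2 * real n ^ 3) + 1 / real n ^ 3 \<le> 2 / real n ^ 3" using N by (simp add: field_simps)
    finally show "\<bar>- 1 / (2 * real n ^ 3) + 8 / (15 * real n ^ 4)\<bar> \<le> 2 / real n ^ 3" by simp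
    show "\<bar>EE n (ee n)\<bar> \<le> 1536 / real n ^ 3 * (1 + KK 4)"
      using EE_abs[of n "ee n"] EE_ee_abs[OF assms] by simp
  qed
  also have "\<dots> = (2 + 1536 * (1 + KK 4)) / real n ^ 3" by (simp add: add_divide_distrib)
  finally show ?thesis .
qed

lemma EE_sq_expand: "EE n (\<lambda>k. (f k - c)^2) = EE n (\<lambda>k. f k ^ 2) - 2 * c * EE n f + c^2"
proof -
  have "EE n (\<lambda>k. (f k - c)^2) = EE n (\<lambda>k. f k ^ 2 - (2 * c) * f k + c^2)"
    by (rule EE_cong) (simp add: power2_eq_square algebra_simps)
  thus ?thesis by (simp only: EE_add EE_diff EE_cmult EE_const)
qed

lemma variance_EE: "binom_varentropy n = EE n (\<lambda>k. (binom_info n k - EE n (binom_info n))^2)"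
  unfolding binom_varentropy_def EE_expect ..

lemma R2_eq: assumes "n \<ge> 1"
  shows "an n ^ 2 * E4 n + 2 * an n * bn n * E6 n + (bn n ^ 2 + 2 * an n * cn n) * E8 n
       - (an n * E2 n + bn n * E4 n + cn n * E6 n)^2 - (1/2 - 1 / (2 * real n) - 1 / (2 * (real n)^2))
     = - 127 / (12 * real n ^ 3) + 2128 / (45 * real n ^ 4) - 7271 / (90 * real n ^ 5)
       + 1213 / (18 * real n ^ 6) - 1013 / (45 * real n ^ 7) - 64 / (225 * real n ^ 8)"
proof -
  define N where "N = real n"
  have N: "N > 0" using assms unfolding N_def by simp
  show ?thesis unfolding an_def bn_def cn_def E2_def E4_def E6_def E8_def N_def[symmetric]
    using N by (simp add: field_simps) (simp add: algebra_simps power2_eq_square power3_eq_cube power4_eq_xxxx power_eq_if)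
qed

lemma abs6b: fixes a b c d e f A B C D E F :: real
  assumes "\<bar>a\<bar> \<le> A" "\<bar>b\<bar> \<le> B" "\<bar>c\<bar> \<le> C" "\<bar>d\<bar> \<le> D" "\<bar>e\<bar> \<le> E" "\<bar>f\<bar> \<le> F"
  shows "\<bar>a + b - c + d - e - f\<bar> \<le> A + B + C + D + E + F"
  using assms unfolding abs_le_iff by linarith

lemma term_bound: fixes N c d :: real assumes "N \<ge> 1" "c \<ge> 0" "d > 0" "j \<ge> 3"
  shows "\<bar>c / (d * N ^ j)\<bar> \<le> c / (d * N ^ 3)"
proof -
  have "N ^ 3 \<le> N ^ j" using assms by (intro power_increasing) auto
  hence "c / (d * N ^ j) \<le> c / (d * N ^ 3)" using assms by (intro divide_left_mono mult_left_mono mult_pos_pos) auto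
  moreover have "c / (d * N ^ j) \<ge> 0" using assms by simp
  ultimately show ?thesis by simp
qed

lemma R2_bound: assumes "n \<ge> 1"
  shows "\<bar>- 127 / (12 * real n ^ 3) + 2128 / (45 * real n ^ 4) - 7271 / (90 * real n ^ 5)
       + 1213 / (18 * real n ^ 6) - 1013 / (45 * real n ^ 7) - 64 / (225 * real n ^ 8)\<bar> \<le> 230 / real n ^ 3"
proof -
  define N where "N = real n"
  have N: "N \<ge> 1" using assms unfolding N_def by simp
  have "\<bar>- 127 / (12 * N ^ 3) + 2128 / (45 * N ^ 4) - 7271 / (90 * N ^ 5)
       + 1213 / (18 * N ^ 6) - 1013 / (45 * N ^ 7) - 64 / (225 * N ^ 8)\<bar>
     \<le> 127 / (12 * N ^ 3) + 2128 / (45 * N ^ 3) + 7271 / (90 * N ^ 3) + 1213 / (18 * N ^ 3) + 1013 / (45 * N ^ 3) + 64 / (225 * N ^ 3)"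
  proof (rule abs6b)
    show "\<bar>- 127 / (12 * N ^ 3)\<bar> \<le> 127 / (12 * N ^ 3)" using N by simp
  qed (rule term_bound; use N in auto)+
  also have "\<dots> \<le> 230 / N ^ 3" using N by (simp add: field_simps)
  finally show ?thesis unfolding N_def .
qed

lemma EEgg2: assumes "n \<ge> 1"
  shows "EE n (\<lambda>k. gg n k ^ 2) = an n ^ 2 * E4 n + 2 * an n * bn n * E6 n + (bn n ^ 2 + 2 * an n * cn n) * E8 n
     + 2 * bn n * cn n * EE n (\<lambda>k. xx n k ^ 10) + cn n ^ 2 * EE n (\<lambda>k. xx n k ^ 12)"
proof -
  have "EE n (\<lambda>k. gg n k ^ 2) = EE n (\<lambda>k. an n ^ 2 * xx n k ^ 4 + 2 * an n * bn n * xx n k ^ 6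
     + (bn n ^ 2 + 2 * an n * cn n) * xx n k ^ 8 + 2 * bn n * cn n * xx n k ^ 10 + cn n ^ 2 * xx n k ^ 12)"
    by (rule EE_cong) (simp add: gg_def power2_eq_square algebra_simps power_add[symmetric] eval_nat_numeral)
  also have "\<dots> = an n ^ 2 * E4 n + 2 * an n * bn n * E6 n + (bn n ^ 2 + 2 * an n * cn n) * E8 n
     + 2 * bn n * cn n * EE n (\<lambda>k. xx n k ^ 10) + cn n ^ 2 * EE n (\<lambda>k. xx n k ^ 12)"
    by (simp only: EE_add EE_cmult Ex[OF assms])
  finally show ?thesis .
qed

lemma var_decomp:
  fixes n :: nat
  defines "G \<equiv> EE n (gg n)" and "Ee \<equiv> EE n (ee n)"
  shows "binom_varentropy n = (EE n (\<lambda>k. gg n k ^ 2) - G^2) + 2 * EE n (\<lambda>k. (gg n k - G) * ee n k)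
           + EE n (\<lambda>k. (ee n k - Ee)^2)"
proof -
  have H: "EE n (binom_info n) = AA n + G + Ee" unfolding G_def Ee_def by (rule EE_info)
  have "binom_varentropy n = EE n (\<lambda>k. (gg n k - G)^2 + 2 * ((gg n k - G) * ee n k - Ee * (gg n k - G)) + (ee n k - Ee)^2)"
    unfolding variance_EE H
    by (rule EE_cong) (simp add: ee_def power2_eq_square algebra_simps)
  also have "\<dots> = EE n (\<lambda>k. (gg n k - G)^2) + 2 * (EE n (\<lambda>k. (gg n k - G) * ee n k) - Ee * EE n (\<lambda>k. gg n k - G))
      + EE n (\<lambda>k. (ee n k - Ee)^2)"
    by (simp only: EE_add EE_diff EE_cmult)
  also have "EE n (\<lambda>k. gg n k - G) = 0" by (simp add: EE_diff EE_const G_def)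
  also have "EE n (\<lambda>k. (gg n k - G)^2) = EE n (\<lambda>k. gg n k ^ 2) - G^2"
    unfolding EE_sq_expand G_def by (simp add: power2_eq_square)
  finally show ?thesis by simp
qed

lemma abs_bn_cn: assumes "n \<ge> 1" shows "\<bar>bn n\<bar> \<le> real n" "\<bar>cn n\<bar> \<le> real n"
  unfolding bn_def cn_def abs_le_iff using assms by simp_all

lemma G_bound: assumes "n \<ge> 1" shows "\<bar>EE n (gg n)\<bar> \<le> 3 * KK 1"
proof -
  have "\<bar>EE n (gg n)\<bar> \<le> EE n (\<lambda>k. \<bar>gg n k\<bar>)" by (rule EE_abs)
  also have "\<dots> \<le> EE n (\<lambda>k. 3 * YY n k ^ 1)" by (rule EE_mono) (use gg_bound assms in simp)
  also have "\<dots> \<le> 3 * KK 1" unfolding EE_cmult using EY[OF assms, of 1] by simp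
  finally show ?thesis .
qed

lemma T2_bound: assumes n: "n \<ge> 8"
  shows "\<bar>EE n (\<lambda>k. (gg n k - EE n (gg n)) * ee n k)\<bar> \<le> 1536 / real n ^ 3 * (6 * KK 1 + 3 * KK 5 + 3 * KK 1 * KK 4)"
proof -
  define G where "G = EE n (gg n)"
  define c where "c = 1536 / real n ^ 3"
  have n1: "n \<ge> 1" using n by simp
  have c0: "c \<ge> 0" unfolding c_def by simp
  have G3: "\<bar>G\<bar> \<le> 3 * KK 1" unfolding G_def by (rule G_bound[OF n1])
  have pt: "\<bar>(gg n k - G) * ee n k\<bar> \<le> c * (3 * YY n k ^ 1 + 3 * YY n k ^ 5 + 3 * KK 1 + 3 * KK 1 * YY n k ^ 4)"
    if k: "k \<le> n" for k
  proof -
    have a: "\<bar>gg n k - G\<bar> \<le> 3 * YY n k + 3 * KK 1" using gg_bound[OF n1 k] G3 by linarith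
    have b: "\<bar>ee n k\<bar> \<le> c * (1 + YY n k ^ 4)" using ee_bound[OF n k] unfolding c_def by simp
    have "\<bar>(gg n k - G) * ee n k\<bar> = \<bar>gg n k - G\<bar> * \<bar>ee n k\<bar>" by (rule abs_mult)
    also have "\<dots> \<le> (3 * YY n k + 3 * KK 1) * (c * (1 + YY n k ^ 4))"
      using YY_nonneg[of n k] KK_nonneg[of 1] by (intro mult_mono a b) auto
    also have "\<dots> = c * (3 * YY n k ^ 1 + 3 * YY n k ^ 5 + 3 * KK 1 + 3 * KK 1 * YY n k ^ 4)"
      by (simp add: algebra_simps power_Suc[symmetric] del: power_Suc)
    finally show ?thesis .
  qed
  have "\<bar>EE n (\<lambda>k. (gg n k - G) * ee n k)\<bar> \<le> EE n (\<lambda>k. \<bar>(gg n k - G) * ee n k\<bar>)" by (rule EE_abs)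
  also have "\<dots> \<le> EE n (\<lambda>k. c * (3 * YY n k ^ 1 + 3 * YY n k ^ 5 + 3 * KK 1 + 3 * KK 1 * YY n k ^ 4))"
    by (rule EE_mono) (rule pt)
  also have "\<dots> = c * (3 * EE n (\<lambda>k. YY n k ^ 1) + 3 * EE n (\<lambda>k. YY n k ^ 5) + 3 * KK 1 + 3 * KK 1 * EE n (\<lambda>k. YY n k ^ 4))"
    by (simp only: EE_add EE_cmult EE_const)
  also have "\<dots> \<le> c * (3 * KK 1 + 3 * KK 5 + 3 * KK 1 + 3 * KK 1 * KK 4)"
    using EY[OF n1, of 1] EY[OF n1, of 5] EY[OF n1, of 4] KK_nonneg[of 1]
    by (intro mult_left_mono c0 add_mono mult_left_mono) auto
  finally show ?thesis unfolding G_def c_def by (simp add: algebra_simps)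
qed

lemma T3_bound: assumes n: "n \<ge> 8"
  shows "0 \<le> EE n (\<lambda>k. (ee n k - EE n (ee n))^2)"
    "EE n (\<lambda>k. (ee n k - EE n (ee n))^2) \<le> (1536 / real n ^ 3)^2 * (2 + 2 * KK 8)"
proof -
  define c where "c = 1536 / real n ^ 3"
  have n1: "n \<ge> 1" using n by simp
  have "EE n (\<lambda>k. 0) \<le> EE n (\<lambda>k. (ee n k - EE n (ee n))^2)" by (rule EE_mono) simp
  thus "0 \<le> EE n (\<lambda>k. (ee n k - EE n (ee n))^2)" by (simp add: EE_const)
  have "EE n (\<lambda>k. (ee n k - EE n (ee n))^2) = EE n (\<lambda>k. ee n k ^ 2) - (EE n (ee n))^2"
    unfolding EE_sq_expand by (simp add: power2_eq_square)
  also have "\<dots> \<le> EE n (\<lambda>k. ee n k ^ 2)" by simp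
  also have "\<dots> \<le> EE n (\<lambda>k. c^2 * (2 + 2 * YY n k ^ 8))"
  proof (rule EE_mono)
    fix k assume k: "k \<le> n"
    have b: "\<bar>ee n k\<bar> \<le> c * (1 + YY n k ^ 4)" using ee_bound[OF n k] unfolding c_def by simp
    have "ee n k ^ 2 = \<bar>ee n k\<bar>^2" by simp
    also have "\<dots> \<le> (c * (1 + YY n k ^ 4))^2" using b by (intro power_mono) auto
    also have "\<dots> = c^2 * (1 + YY n k ^ 4)^2" by (simp add: power_mult_distrib)
    also have "(1 + YY n k ^ 4)^2 \<le> 2 + 2 * YY n k ^ 8"
    proof -
      have "(1 + YY n k ^ 4)^2 = 1 + 2 * YY n k ^ 4 + YY n k ^ 8" by (simp add: power2_eq_square algebra_simps power_add[symmetric])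
      moreover have "2 * YY n k ^ 4 \<le> 1 + YY n k ^ 8"
      proof -
        have "0 \<le> (YY n k ^ 4 - 1)^2" by simp
        thus ?thesis by (simp add: power2_eq_square algebra_simps power_add[symmetric])
      qed
      ultimately show ?thesis by simp
    qed
    hence "c^2 * (1 + YY n k ^ 4)^2 \<le> c^2 * (2 + 2 * YY n k ^ 8)" by (intro mult_left_mono) auto
    finally show "ee n k ^ 2 \<le> c^2 * (2 + 2 * YY n k ^ 8)" .
  qed
  also have "\<dots> = c^2 * (2 + 2 * EE n (\<lambda>k. YY n k ^ 8))" by (simp only: EE_add EE_cmult EE_const)
  also have "\<dots> \<le> c^2 * (2 + 2 * KK 8)" using EY[OF n1, of 8] by (intro mult_left_mono) auto
  finally show "EE n (\<lambda>k. (ee n k - EE n (ee n))^2) \<le> (1536 / real n ^ 3)^2 * (2 + 2 * KK 8)" unfolding c_def .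
qed

lemma varentropy_bound: assumes n: "n \<ge> 8"
  shows "\<bar>binom_varentropy n - (1/2 - 1 / (2 * real n) - 1 / (2 * (real n)^2))\<bar>
     \<le> (230 + 2 * KK 5 + KK 6 + 2 * 1536 * (6 * KK 1 + 3 * KK 5 + 3 * KK 1 * KK 4) + 1536^2 * (2 + 2 * KK 8)) / real n ^ 3"
proof -
  have n1: "n \<ge> 1" using n by simp
  define N where "N = real n"
  have N1: "N \<ge> 1" using n1 unfolding N_def by simp
  define G where "G = EE n (gg n)"
  define X10 where "X10 = EE n (\<lambda>k. xx n k ^ 10)"
  define X12 where "X12 = EE n (\<lambda>k. xx n k ^ 12)"
  define T2 where "T2 = EE n (\<lambda>k. (gg n k - G) * ee n k)"
  define T3 where "T3 = EE n (\<lambda>k. (ee n k - EE n (ee n))^2)"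
  define R where "R = - 127 / (12 * real n ^ 3) + 2128 / (45 * real n ^ 4) - 7271 / (90 * real n ^ 5)
       + 1213 / (18 * real n ^ 6) - 1013 / (45 * real n ^ 7) - 64 / (225 * real n ^ 8)"
  have G: "G = an n * E2 n + bn n * E4 n + cn n * E6 n" unfolding G_def by (rule EEgg[OF n1])
  have V: "binom_varentropy n = (EE n (\<lambda>k. gg n k ^ 2) - G^2) + 2 * T2 + T3"
    unfolding G_def T2_def T3_def by (rule var_decomp)
  have eq: "binom_varentropy n - (1/2 - 1 / (2 * real n) - 1 / (2 * (real n)^2))
      = R + 2 * bn n * cn n * X10 + cn n ^ 2 * X12 + 2 * T2 + T3"
    using R2_eq[OF n1] unfolding V EEgg2[OF n1] X10_def[symmetric] X12_def[symmetric] G R_def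
    by (simp add: algebra_simps)
  have bR: "\<bar>R\<bar> \<le> 230 / N ^ 3" unfolding R_def N_def by (rule R2_bound[OF n1])
  have X10: "X10 = EE n (\<lambda>k. YY n k ^ 5) / N ^ 5" unfolding X10_def N_def using Ex_high[OF n1, of 5] by simp
  have X12: "X12 = EE n (\<lambda>k. YY n k ^ 6) / N ^ 6" unfolding X12_def N_def using Ex_high[OF n1, of 6] by simp
  have b10: "\<bar>2 * bn n * cn n * X10\<bar> \<le> 2 * KK 5 / N ^ 3"
  proof -
    have "\<bar>2 * bn n * cn n * X10\<bar> = 2 * \<bar>bn n\<bar> * \<bar>cn n\<bar> * \<bar>X10\<bar>" by (simp add: abs_mult)
    also have "\<dots> \<le> 2 * N * N * (KK 5 / N ^ 5)"
    proof (intro mult_mono)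
      show "\<bar>X10\<bar> \<le> KK 5 / N ^ 5" unfolding X10 using EY[OF n1, of 5] EY_nonneg[of n 5] N1
        by (auto intro: divide_right_mono)
    qed (use abs_bn_cn[OF n1] N1 in \<open>auto simp: N_def\<close>)
    also have "\<dots> = 2 * KK 5 / N ^ 3" using N1 by (simp add: field_simps power_eq_if)
    finally show ?thesis .
  qed
  have b12: "\<bar>cn n ^ 2 * X12\<bar> \<le> KK 6 / N ^ 3"
  proof -
    have "\<bar>cn n ^ 2 * X12\<bar> = \<bar>cn n\<bar>^2 * \<bar>X12\<bar>" by (simp add: abs_mult power_abs)
    also have "\<dots> \<le> N^2 * (KK 6 / N ^ 6)"
    proof (intro mult_mono power_mono)
      show "\<bar>X12\<bar> \<le> KK 6 / N ^ 6" unfolding X12 using EY[OF n1, of 6] EY_nonneg[of n 6] N1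
        by (auto intro: divide_right_mono)
    qed (use abs_bn_cn[OF n1] N1 in \<open>auto simp: N_def\<close>)
    also have "\<dots> = KK 6 / N ^ 4" using N1 by (simp add: field_simps power_eq_if)
    also have "\<dots> \<le> KK 6 / N ^ 3" using N1 KK_nonneg[of 6] by (intro divide_left_mono power_increasing) auto
    finally show ?thesis .
  qed
  have b2: "\<bar>2 * T2\<bar> \<le> 2 * 1536 * (6 * KK 1 + 3 * KK 5 + 3 * KK 1 * KK 4) / N ^ 3"
  proof -
    have t: "\<bar>T2\<bar> \<le> 1536 / N ^ 3 * (6 * KK 1 + 3 * KK 5 + 3 * KK 1 * KK 4)"
      using T2_bound[OF n] unfolding T2_def G_def N_def .
    have "\<bar>2 * T2\<bar> = 2 * \<bar>T2\<bar>" by simp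
    also have "\<dots> \<le> 2 * (1536 / N ^ 3 * (6 * KK 1 + 3 * KK 5 + 3 * KK 1 * KK 4))" using t by (rule mult_left_mono) simp
    also have "\<dots> = 2 * 1536 * (6 * KK 1 + 3 * KK 5 + 3 * KK 1 * KK 4) / N ^ 3" by simp
    finally show ?thesis .
  qed
  have b3: "\<bar>T3\<bar> \<le> 1536^2 * (2 + 2 * KK 8) / N ^ 3"
  proof -
    have "\<bar>T3\<bar> \<le> (1536 / N ^ 3)^2 * (2 + 2 * KK 8)" using T3_bound[OF n] unfolding T3_def N_def by simp
    also have "\<dots> = 1536^2 * (2 + 2 * KK 8) / N ^ 3 / N ^ 3" by (simp add: power_divide)
    also have "\<dots> \<le> 1536^2 * (2 + 2 * KK 8) / N ^ 3"
    proof -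
      have z: "0 \<le> 1536^2 * (2 + 2 * KK 8) / N ^ 3" using N1 KK_nonneg[of 8] by simp
      have "1536^2 * (2 + 2 * KK 8) / N ^ 3 / N ^ 3 \<le> 1536^2 * (2 + 2 * KK 8) / N ^ 3 / 1"
        by (rule frac_le) (use z N1 in \<open>auto intro: one_le_power\<close>)
      thus ?thesis by simp
    qed
    finally show ?thesis .
  qed
  have "\<bar>R + 2 * bn n * cn n * X10 + cn n ^ 2 * X12 + 2 * T2 + T3\<bar>
     \<le> 230 / N ^ 3 + 2 * KK 5 / N ^ 3 + KK 6 / N ^ 3 + 2 * 1536 * (6 * KK 1 + 3 * KK 5 + 3 * KK 1 * KK 4) / N ^ 3
        + 1536^2 * (2 + 2 * KK 8) / N ^ 3"
    using bR b10 b12 b2 b3 unfolding abs_le_iff by linarith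
  also have "\<dots> = (230 + 2 * KK 5 + KK 6 + 2 * 1536 * (6 * KK 1 + 3 * KK 5 + 3 * KK 1 * KK 4) + 1536^2 * (2 + 2 * KK 8)) / N ^ 3"
    by (simp add: add_divide_distrib)
  finally show ?thesis unfolding eq N_def .
qed

theorem lemma6:
  shows "(\<lambda>n. binom_entropy n - (1/2 * ln (pi * exp 1 * real n / 2) - 1 / (12 * (real n)^2)))
           \<in> O(\<lambda>n. 1 / (real n)^3) \<and>
         (\<lambda>n. binom_varentropy n - (1/2 - 1 / (2 * real n) - 1 / (2 * (real n)^2)))
           \<in> O(\<lambda>n. 1 / (real n)^3)"
proof
  show "(\<lambda>n. binom_entropy n - (1/2 * ln (pi * exp 1 * real n / 2) - 1 / (12 * (real n)^2)))
           \<in> O(\<lambda>n. 1 / (real n)^3)"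
  proof (rule bigoI[where c = "2 + 1536 * (1 + KK 4)"])
    show "\<forall>\<^sub>F n in at_top. norm (binom_entropy n - (1/2 * ln (pi * exp 1 * real n / 2) - 1 / (12 * (real n)^2)))
            \<le> (2 + 1536 * (1 + KK 4)) * norm (1 / (real n)^3)"
      using eventually_ge_at_top[of "8::nat"]
    proof eventually_elim
      case (elim n)
      thus ?case using entropy_bound[OF elim] by simp
    qed
  qed
  show "(\<lambda>n. binom_varentropy n - (1/2 - 1 / (2 * real n) - 1 / (2 * (real n)^2)))
           \<in> O(\<lambda>n. 1 / (real n)^3)"
  proof (rule bigoI[where c = "230 + 2 * KK 5 + KK 6 + 2 * 1536 * (6 * KK 1 + 3 * KK 5 + 3 * KK 1 * KK 4) + 1536^2 * (2 + 2 * KK 8)"])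
    show "\<forall>\<^sub>F n in at_top. norm (binom_varentropy n - (1/2 - 1 / (2 * real n) - 1 / (2 * (real n)^2)))
            \<le> (230 + 2 * KK 5 + KK 6 + 2 * 1536 * (6 * KK 1 + 3 * KK 5 + 3 * KK 1 * KK 4) + 1536^2 * (2 + 2 * KK 8)) * norm (1 / (real n)^3)"
      using eventually_ge_at_top[of "8::nat"]
    proof eventually_elim
      case (elim n)
      thus ?case using varentropy_bound[OF elim] by simp
    qed
  qed
qed

end
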